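(* The following problem is decidable: given an ISRL $IS$ with model $M$, a formula $\varphi$ of the $A\bar BN$ fragment of EHS$^{+}$, and an interval $I$ of $M$, decide whether $M,I\models_B\varphi$.
   Context: **Regular expressions.** For a finite alphabet $X$, $RE_X$ is the set of regular expressions $e ::= \emptyset \mid \epsilon \mid s \mid e;e \mid e+e \mid e^*$ with $s\in X$. $L(e)$ denotes the standard language of $e$; $|e|$ is the number of symbols of $e$. **ISRL.** Fix agents $A=\{0,\dots,m\}$ and a finite set $\mathit{Var}$ of propositional variables. An ISRL is $IS=(\{L_i\},\{l_i^0\},\{ACT_i\},\{P_i\},\{t_i\},\lambda)$ where, for each $i\in A$: - $L_i$ is a finite set of local states and $l_i^0\in L_i$; - $ACT_i$ is a finite set of actions and $P_i:L_i\to 2^{ACT_i}$; - $t_i\subseteq L_i\times ACT\times L_i$, with $ACT=ACT_0\times\dots\times ACT_m$; - $\lambda:\mathit{Var}\to RE_G$, where $G=L_0\times\dots\times L_m$. $t^G((l_0,\dots,l_m),(l'_0,\dots,l'_m))$ holds iff some $(a_0,\dots,a_m)\in ACT$ has $a_i\in P_i(l_i)$ and $(l_i,(a_0,\dots,a_m),l'_i)\in t_i$ for all $i$. **Model of $IS$.** - States $S$ are the nonempty sequences $g_0\dots g_k$ with $g_0=(l_0^0,\dots,l_m^0)$ and $t^G(g_j,g_{j+1})$ for all $j<k$. - $t(g_0\dots g_k,g'_0\dots g'_l)$ iff $l=k+1$ and $g_j=g'_j$ for all $j\le k$. - $g_0\dots g_k\sim_i g'_0\dots g'_l$ iff $g_k,g'_l$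 have the same $i$-th component. - $\mathrm{g}(g_0\dots g_k)=g_k$. **Intervals.** An interval is a nonempty sequence $I=s_1\dots s_n$ of states with $t(s_j,s_{j+1})$; $|I|=n$, $\mathit{first}(I)=s_1$, $\mathit{last}(I)=s_n$, $\mathrm{g}(I)=\mathrm{g}(s_1)\dots\mathrm{g}(s_n)$, and $\mathit{pi}(I)$ iff $n=1$. **Indistinguishability.** $I=s_1\dots s_k\sim_i s'_1\dots s'_l$ iff $k=l$ and $s_j\sim_i s'_j$ for all $j$; $\sim_\Gamma$ is the transitive closure of $\bigcup_{i\in\Gamma}\sim_i$. **Relations used:** - $I R_A I'$ iff $\mathit{first}(I')=\mathit{last}(I)$; - $I R_{\bar B} I'$ iff $I'=II_1$ for some interval $I_1$; - $I R_N I'$ iff $t(\mathit{last}(I),\mathit{first}(I'))$. **$A\bar BN$ fragment of EHS$^{+}$.** Syntax: $\varphi::=\mathit{pi}\mid p\mid\neg\varphi\mid\varphi\wedge\varphi\mid K_i\varphi\mid C_\Gamma\varphi\mid\langle A\rangle\varphi\mid\langle\bar B\rangle\varphi\mid\langle N\rangle\varphi$, with $p\in\mathit{Var}$, $i\in A$, $\Gamma\subseteq A$. **Top-level sub-formulas.** A top-level sub-formula of $\varphi$ is a sub-formula of the form $X\psi$ with $X\in\{K_i,C_\Gamma,\langle A\rangle,\langle\bar B\rangle,\langle N\rangle\}$ that is not in the scope of any modality. **The bound $f^{IS}$.** Define recursively $$f^{IS}(\varphi)=\Big(2|G|^2\prod_{q\in\mathit{Var}}2^{|\lambda(q)|}\Big)\cdot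 2^{f^{IS}(\varphi_1)}\cdots 2^{f^{IS}(\varphi_k)},$$ where $X_1\varphi_1,\dots,X_k\varphi_k$ are the top-level sub-formulas of $\varphi$. **Bounded semantics $\models_B$:** - $M,I\models_B\mathit{pi}$ iff $|I|=1$; - $M,I\models_B p$ iff $\mathrm{g}(I)\in L(\lambda(p))$; - Boolean connectives as usual; - $M,I\models_B K_i\varphi$ iff $M,I'\models_B\varphi$ for all $I'\sim_i I$; - $M,I\models_B C_\Gamma\varphi$ iff $M,I'\models_B\varphi$ for all $I'\sim_\Gamma I$; - for $X\in\{A,\bar B,N\}$: $M,I\models_B\langle X\rangle\varphi$ iff there is an interval $I'$ with $|I'|\le|I|+f^{IS}(\varphi)$, $I R_X I'$ and $M,I'\models_B\varphi$. *)

theory Defs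
  imports Main "HOL-Library.Nat_Bijection"
begin

section \<open>Model of computation: Kleene partial recursive functions on nat\<close>

datatype recf = Zr | Sc | Id nat | Cn recf "recf list" | Pr recf recf | Mn recf

inductive evals :: "recf \<Rightarrow> nat list \<Rightarrow> nat \<Rightarrow> bool" where
  ev_Zr: "evals Zr xs 0"
| ev_Sc: "evals Sc (x # xs) (Suc x)"
| ev_Id: "k < length xs \<Longrightarrow> evals (Id k) xs (xs ! k)"
| ev_Cn: "list_all2 (\<lambda>g y. evals g xs y) gs ys \<Longrightarrow> evals f ys z \<Longrightarrow> evals (Cn f gs) xs z"
| ev_Pr0: "evals f xs y \<Longrightarrow> evals (Pr f g) (0 # xs) y"
| ev_PrS: "evals (Pr f g) (x # xs) r \<Longrightarrow> evals g (x # r # xs) y \<Longrightarrow> evals (Pr f g) (Suc x # xs) y"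
| ev_Mn: "evals f (y # xs) 0 \<Longrightarrow> (\<forall>z<y. \<exists>v. evals f (z # xs) v \<and> 0 < v) \<Longrightarrow> evals (Mn f) xs y"

datatype 'a rexp = RZero | ROne | RAtom 'a | RTimes "'a rexp" "'a rexp" | RPlus "'a rexp" "'a rexp"
  | RStar "'a rexp"

fun lang :: "'a rexp \<Rightarrow> 'a list set" where
  "lang RZero = {}"
| "lang ROne = {[]}"
| "lang (RAtom a) = {[a]}"
| "lang (RTimes e1 e2) = {u @ v | u v. u \<in> lang e1 \<and> v \<in> lang e2}"
| "lang (RPlus e1 e2) = lang e1 \<union> lang e2"
| "lang (RStar e) = {concat ws | ws. \<forall>w\<in>set ws. w \<in> lang e}"

fun rsize :: "'a rexp \<Rightarrow> nat" where
  "rsize RZero = 1"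
| "rsize ROne = 1"
| "rsize (RAtom a) = 1"
| "rsize (RTimes e1 e2) = rsize e1 + rsize e2 + 1"
| "rsize (RPlus e1 e2) = rsize e1 + rsize e2 + 1"
| "rsize (RStar e) = rsize e + 1"

fun ratoms :: "'a rexp \<Rightarrow> 'a set" where
  "ratoms RZero = {}"
| "ratoms ROne = {}"
| "ratoms (RAtom a) = {a}"
| "ratoms (RTimes e1 e2) = ratoms e1 \<union> ratoms e2"
| "ratoms (RPlus e1 e2) = ratoms e1 \<union> ratoms e2"
| "ratoms (RStar e) = ratoms e"

section \<open>Interpreted systems with regular labelling (finite, concrete representation)\<close>

text \<open>Agents are 0..nag; agent i has local states {0..<locs!i}, initial state init!i,
  actions {0..<acts!i}, protocol prot!i!l (list of allowed actions in local state l),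
  local transition relation trans!i (triples (l, joint action, l')).
  Global states are lists of local states of length nag+1.
  Propositional variables are 0..<length lam, labelled by lam!q :: global-state regular expression.\<close>
record isrl =
  nag :: nat
  locs :: "nat list"
  init :: "nat list"
  acts :: "nat list"
  prot :: "nat list list list"
  trans :: "(nat \<times> nat list \<times> nat) list list"
  lam :: "nat list rexp list"

definition gstates :: "isrl \<Rightarrow> nat list set" where
  "gstates IS = {g. length g = Suc (nag IS) \<and> (\<forall>i\<le>nag IS. g ! i < locs IS ! i)}"

definition jactions :: "isrl \<Rightarrow> nat list set" where
  "jactions IS = {a. length a = Suc (nag IS) \<and> (\<forall>i\<le>nag IS. a ! i < acts IS ! i)}"

definition wf_isrl :: "isrl \<Rightarrow> bool" where
  "wf_isrl IS \<longleftrightarrow>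
     length (locs IS) = Suc (nag IS) \<and> length (init IS) = Suc (nag IS) \<and>
     length (acts IS) = Suc (nag IS) \<and> length (prot IS) = Suc (nag IS) \<and>
     length (trans IS) = Suc (nag IS) \<and>
     (\<forall>i\<le>nag IS. init IS ! i < locs IS ! i \<and>
        length (prot IS ! i) = locs IS ! i \<and>
        (\<forall>l < locs IS ! i. \<forall>a\<in>set (prot IS ! i ! l). a < acts IS ! i) \<and>
        (\<forall>(l, a, l')\<in>set (trans IS ! i). l < locs IS ! i \<and> l' < locs IS ! i \<and> a \<in> jactions IS)) \<and>
     (\<forall>q<length (lam IS). ratoms (lam IS ! q) \<subseteq> gstates IS)"

definition tG :: "isrl \<Rightarrow> nat list \<Rightarrow> nat list \<Rightarrow> bool" where
  "tG IS g g' \<longleftrightarrow> g \<in> gstates IS \<and> g' \<in> gstates IS \<and>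
     (\<exists>a\<in>jactions IS. \<forall>i\<le>nag IS. a ! i \<in> set (prot IS ! i ! (g ! i)) \<and>
        (g ! i, a, g' ! i) \<in> set (trans IS ! i))"

text \<open>States of the model: nonempty runs from the initial global state.\<close>
definition isState :: "isrl \<Rightarrow> nat list list \<Rightarrow> bool" where
  "isState IS s \<longleftrightarrow> s \<noteq> [] \<and> hd s = init IS \<and> (\<forall>j. Suc j < length s \<longrightarrow> tG IS (s ! j) (s ! Suc j))"

definition tr :: "isrl \<Rightarrow> nat list list \<Rightarrow> nat list list \<Rightarrow> bool" where
  "tr IS s s' \<longleftrightarrow> isState IS s \<and> isState IS s' \<and> length s' = Suc (length s) \<and> take (length s) s' = s"

definition simS :: "isrl \<Rightarrow> nat \<Rightarrow> nat list list \<Rightarrow> nat list list \<Rightarrow> bool" where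
  "simS IS i s s' \<longleftrightarrow> isState IS s \<and> isState IS s' \<and> last s ! i = last s' ! i"

definition isInterval :: "isrl \<Rightarrow> nat list list list \<Rightarrow> bool" where
  "isInterval IS I \<longleftrightarrow> I \<noteq> [] \<and> (\<forall>s\<in>set I. isState IS s) \<and>
     (\<forall>j. Suc j < length I \<longrightarrow> tr IS (I ! j) (I ! Suc j))"

definition simI :: "isrl \<Rightarrow> nat \<Rightarrow> nat list list list \<Rightarrow> nat list list list \<Rightarrow> bool" where
  "simI IS i I I' \<longleftrightarrow> isInterval IS I \<and> isInterval IS I' \<and> length I = length I' \<and>
     (\<forall>j<length I. simS IS i (I ! j) (I' ! j))"

definition simC :: "isrl \<Rightarrow> nat set \<Rightarrow> nat list list list \<Rightarrow> nat list list list \<Rightarrow> bool" where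
  "simC IS \<Gamma> = tranclp (\<lambda>I I'. \<exists>i\<in>\<Gamma>. simI IS i I I')"

definition gseq :: "nat list list list \<Rightarrow> nat list list" where
  "gseq I = map last I"

section \<open>The A Bbar N fragment of EHS+\<close>

datatype form = Pi | Prop nat | Neg form | And form form | K nat form | C "nat list" form
  | DiaA form | DiaBbar form | DiaN form

fun wf_form :: "isrl \<Rightarrow> form \<Rightarrow> bool" where
  "wf_form IS Pi = True"
| "wf_form IS (Prop p) = (p < length (lam IS))"
| "wf_form IS (Neg a) = wf_form IS a"
| "wf_form IS (And a b) = (wf_form IS a \<and> wf_form IS b)"
| "wf_form IS (K i a) = (i \<le> nag IS \<and> wf_form IS a)"
| "wf_form IS (C G a) = ((\<forall>i\<in>set G. i \<le> nag IS) \<and> wf_form IS a)"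
| "wf_form IS (DiaA a) = wf_form IS a"
| "wf_form IS (DiaBbar a) = wf_form IS a"
| "wf_form IS (DiaN a) = wf_form IS a"

text \<open>top-level sub-formulas (modal sub-formulas not in the scope of any modality)\<close>
fun tops :: "form \<Rightarrow> form list" where
  "tops Pi = []"
| "tops (Prop p) = []"
| "tops (Neg a) = tops a"
| "tops (And a b) = tops a @ tops b"
| "tops \<phi> = [\<phi>]"

fun marg :: "form \<Rightarrow> form" where
  "marg (K i a) = a"
| "marg (C G a) = a"
| "marg (DiaA a) = a"
| "marg (DiaBbar a) = a"
| "marg (DiaN a) = a"
| "marg \<phi> = \<phi>"

lemma tops_smaller: "\<chi> \<in> set (tops \<phi>) \<Longrightarrow> size (marg \<chi>) < size \<phi>"
  by (induction \<phi> rule: tops.induct) auto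

definition fbase :: "isrl \<Rightarrow> nat" where
  "fbase IS = 2 * card (gstates IS) ^ 2 * (\<Prod>q<length (lam IS). 2 ^ rsize (lam IS ! q))"

text \<open>f^IS(phi) = fbase * prod over the (distinct) top-level sub-formulas X psi of 2^(f^IS psi).
  Defined by recursion on a fuel parameter; fuel size phi suffices since the argument psi of a
  top-level sub-formula is strictly smaller than phi, and formulas of size 0 have no top-level
  sub-formulas.\<close>
primrec fIS_aux :: "nat \<Rightarrow> isrl \<Rightarrow> form \<Rightarrow> nat" where
  "fIS_aux 0 IS \<phi> = fbase IS"
| "fIS_aux (Suc n) IS \<phi> = fbase IS * prod_list (map (\<lambda>\<chi>. 2 ^ fIS_aux n IS (marg \<chi>)) (remdups (tops \<phi>)))"

definition fIS :: "isrl \<Rightarrow> form \<Rightarrow> nat" where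
  "fIS IS \<phi> = fIS_aux (size \<phi>) IS \<phi>"

lemma tops_size0: "size \<phi> = 0 \<Longrightarrow> tops \<phi> = []"
  by (cases \<phi>) auto

lemma fIS_aux_fuel:
  "size \<phi> \<le> n \<Longrightarrow> size \<phi> \<le> m \<Longrightarrow> fIS_aux n IS \<phi> = fIS_aux m IS \<phi>"
proof (induction n arbitrary: m \<phi>)
  case 0
  then show ?case by (cases m) (auto simp: tops_size0)
next
  case (Suc n)
  show ?case
  proof (cases m)
    case 0
    then show ?thesis using Suc.prems by (auto simp: tops_size0)
  next
    case (Suc m')
    have "\<And>\<chi>. \<chi> \<in> set (remdups (tops \<phi>)) \<Longrightarrow> fIS_aux n IS (marg \<chi>) = fIS_aux m' IS (marg \<chi>)"
      using Suc.IH Suc.prems \<open>m = Suc m'\<close> tops_smaller by (metis Suc_le_mono less_Suc_eq_le order.strict_trans2 set_remdups)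
    then have "map (\<lambda>\<chi>. (2::nat) ^ fIS_aux n IS (marg \<chi>)) (remdups (tops \<phi>)) =
               map (\<lambda>\<chi>. 2 ^ fIS_aux m' IS (marg \<chi>)) (remdups (tops \<phi>))"
      by (intro map_cong) auto
    then show ?thesis unfolding \<open>m = Suc m'\<close> fIS_aux.simps by (simp only:)
  qed
qed

lemma fIS_eq:
  "fIS IS \<phi> = fbase IS * prod_list (map (\<lambda>\<chi>. 2 ^ fIS IS (marg \<chi>)) (remdups (tops \<phi>)))"
proof (cases "size \<phi>")
  case 0
  then show ?thesis by (simp add: fIS_def tops_size0)
next
  case (Suc n)
  have "\<And>\<chi>. \<chi> \<in> set (remdups (tops \<phi>)) \<Longrightarrow> fIS_aux n IS (marg \<chi>) = fIS IS (marg \<chi>)"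
    unfolding fIS_def using Suc tops_smaller fIS_aux_fuel by (metis less_Suc_eq_le order_refl set_remdups)
  then have "map (\<lambda>\<chi>. (2::nat) ^ fIS_aux n IS (marg \<chi>)) (remdups (tops \<phi>)) =
             map (\<lambda>\<chi>. 2 ^ fIS IS (marg \<chi>)) (remdups (tops \<phi>))"
    by (intro map_cong) auto
  then show ?thesis unfolding fIS_def[of IS \<phi>] Suc fIS_aux.simps fIS_def[symmetric] by (simp only:)
qed

fun satB :: "isrl \<Rightarrow> nat list list list \<Rightarrow> form \<Rightarrow> bool" where
  "satB IS I Pi = (length I = 1)"
| "satB IS I (Prop p) = (gseq I \<in> lang (lam IS ! p))"
| "satB IS I (Neg a) = (\<not> satB IS I a)"
| "satB IS I (And a b) = (satB IS I a \<and> satB IS I b)"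
| "satB IS I (K i a) = (\<forall>I'. simI IS i I I' \<longrightarrow> satB IS I' a)"
| "satB IS I (C G a) = (\<forall>I'. simC IS (set G) I I' \<longrightarrow> satB IS I' a)"
| "satB IS I (DiaA a) = (\<exists>I'. isInterval IS I' \<and> length I' \<le> length I + fIS IS a \<and>
      hd I' = last I \<and> satB IS I' a)"
| "satB IS I (DiaBbar a) = (\<exists>I'. isInterval IS I' \<and> length I' \<le> length I + fIS IS a \<and>
      (\<exists>I1. isInterval IS I1 \<and> I' = I @ I1) \<and> satB IS I' a)"
| "satB IS I (DiaN a) = (\<exists>I'. isInterval IS I' \<and> length I' \<le> length I + fIS IS a \<and>
      tr IS (last I) (hd I') \<and> satB IS I' a)"

definition enc_list :: "('a \<Rightarrow> nat) \<Rightarrow> 'a list \<Rightarrow> nat" where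
  "enc_list e xs = list_encode (map e xs)"

fun enc_rexp :: "nat list rexp \<Rightarrow> nat" where
  "enc_rexp RZero = prod_encode (0, 0)"
| "enc_rexp ROne = prod_encode (1, 0)"
| "enc_rexp (RAtom g) = prod_encode (2, list_encode g)"
| "enc_rexp (RTimes a b) = prod_encode (3, prod_encode (enc_rexp a, enc_rexp b))"
| "enc_rexp (RPlus a b) = prod_encode (4, prod_encode (enc_rexp a, enc_rexp b))"
| "enc_rexp (RStar a) = prod_encode (5, enc_rexp a)"

fun enc_form :: "form \<Rightarrow> nat" where
  "enc_form Pi = prod_encode (0, 0)"
| "enc_form (Prop p) = prod_encode (1, p)"
| "enc_form (Neg a) = prod_encode (2, enc_form a)"
| "enc_form (And a b) = prod_encode (3, prod_encode (enc_form a, enc_form b))"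
| "enc_form (K i a) = prod_encode (4, prod_encode (i, enc_form a))"
| "enc_form (C G a) = prod_encode (5, prod_encode (list_encode G, enc_form a))"
| "enc_form (DiaA a) = prod_encode (6, enc_form a)"
| "enc_form (DiaBbar a) = prod_encode (7, enc_form a)"
| "enc_form (DiaN a) = prod_encode (8, enc_form a)"

definition enc_trip :: "nat \<times> nat list \<times> nat \<Rightarrow> nat" where
  "enc_trip x = (case x of (l, a, l') \<Rightarrow> prod_encode (l, prod_encode (list_encode a, l')))"

definition enc_isrl :: "isrl \<Rightarrow> nat" where
  "enc_isrl IS = list_encode
     [nag IS, list_encode (locs IS), list_encode (init IS), list_encode (acts IS),
      enc_list (enc_list list_encode) (prot IS),
      enc_list (enc_list enc_trip) (trans IS),
      enc_list enc_rexp (lam IS)]"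

definition enc_interval :: "nat list list list \<Rightarrow> nat" where
  "enc_interval I = enc_list (enc_list list_encode) I"

definition enc_inst :: "isrl \<Rightarrow> form \<Rightarrow> nat list list list \<Rightarrow> nat" where
  "enc_inst IS \<phi> I = list_encode [enc_isrl IS, enc_form \<phi>, enc_interval I]"

end

theory Submission
  imports Defs
begin


primrec iter :: "(nat \<Rightarrow> nat \<Rightarrow> nat) \<Rightarrow> nat \<Rightarrow> nat \<Rightarrow> nat" where
  "iter f 0 r = r"
| "iter f (Suc n) r = f n (iter f n r)"

datatype pexp = V nat | Z | S pexp | R pexp pexp pexp | Call pexp "pexp list"

fun peval :: "pexp \<Rightarrow> nat list \<Rightarrow> nat" where
  "peval (V k) env = (if k < length env then env ! k else 0)"
| "peval Z env = 0"
| "peval (S e) env = Suc (peval e env)"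
| "peval (R t z s) env = iter (\<lambda>k r. peval s (k # r # env)) (peval t env) (peval z env)"
| "peval (Call f as) env = peval f (map (\<lambda>a. peval a env) as)"

fun compile :: "nat \<Rightarrow> pexp \<Rightarrow> recf" where
  "compile n (V k) = (if k < n then Id k else Zr)"
| "compile n Z = Zr"
| "compile n (S e) = Cn Sc [compile n e]"
| "compile n (R t z s) = Cn (Pr (compile n z) (compile (Suc (Suc n)) s)) (compile n t # map Id [0..<n])"
| "compile n (Call f as) = Cn (compile (length as) f) (map (compile n) as)"

lemma evals_Pr_fold:
  assumes "\<And>env. length env = n \<Longrightarrow> evals F env (peval z env)"
    and "\<And>env. length env = Suc (Suc n) \<Longrightarrow> evals G env (peval s env)"
    and "length env = n"
  shows "evals (Pr F G) (m # env) (iter (\<lambda>k r. peval s (k # r # env)) m (peval z env))"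
proof (induction m)
  case 0
  then show ?case using assms by (auto intro: evals.intros)
next
  case (Suc m)
  show ?case using evals.ev_PrS[OF Suc] assms(2)[of "m # _ # env"] assms(3) by simp
qed

lemma comp_correct: "length env = n \<Longrightarrow> evals (compile n e) env (peval e env)"
proof (induction e arbitrary: n env)
  case (V k)
  then show ?case by (auto intro: evals.intros)
next
  case Z
  then show ?case by (auto intro: evals.intros)
next
  case (S e)
  then show ?case by (auto intro!: evals.intros)
next
  case (R t z s)
  have 1: "list_all2 (\<lambda>g y. evals g env y) (compile n t # map Id [0..<n]) (peval t env # env)"
    using R unfolding list_all2_conv_all_nth
    by (auto simp: nth_Cons split: nat.split intro: evals.intros)
  have 2: "evals (Pr (compile n z) (compile (Suc (Suc n)) s)) (peval t env # env) (peval (R t z s) env)"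
    using evals_Pr_fold[of n "compile n z" z "compile (Suc (Suc n)) s" s env] R by simp
  show ?case using evals.ev_Cn[OF 1 2] by simp
next
  case (Call f as)
  have 1: "list_all2 (\<lambda>g y. evals g env y) (map (compile n) as) (map (\<lambda>a. peval a env) as)"
    using Call by (auto simp: list_all2_conv_all_nth)
  have 2: "evals (compile (length as) f) (map (\<lambda>a. peval a env) as) (peval f (map (\<lambda>a. peval a env) as))"
    using Call(1)[of "map (\<lambda>a. peval a env) as"] by simp
  show ?case using evals.ev_Cn[OF 1 2] by simp
qed



definition pfst :: "nat \<Rightarrow> nat" where "pfst n = fst (prod_decode n)"
definition psnd :: "nat \<Rightarrow> nat" where "psnd n = snd (prod_decode n)"
definition pr :: "nat \<Rightarrow> nat \<Rightarrow> nat" where "pr a b = prod_encode (a, b)"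

lemma pfst_pr[simp]: "pfst (pr a b) = a" and psnd_pr[simp]: "psnd (pr a b) = b"
  by (simp_all add: pfst_def psnd_def pr_def)

definition ADD where "ADD = R (V 1) (V 0) (S (V 1))"
definition PRED where "PRED = R (V 0) Z (V 0)"
definition SUB where "SUB = R (V 1) (V 0) (Call PRED [V 1])"
definition MUL where "MUL = R (V 1) Z (Call ADD [V 1, V 2])"
definition IFZ where "IFZ = R (V 0) (V 1) (V 4)"
definition TRI where "TRI = R (S (V 0)) Z (Call ADD [V 1, V 0])"
definition PE where "PE = Call ADD [Call TRI [Call ADD [V 0, V 1]], V 0]"
definition LEQ where "LEQ = Call IFZ [Call SUB [V 0, V 1], S Z, Z]"
definition CNT where "CNT = R (V 0) Z (Call ADD [V 1, Call LEQ [Call TRI [S (V 0)], V 2]])"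
definition PF where "PF = Call SUB [V 0, Call TRI [Call CNT [V 0]]]"
definition PS where "PS = Call SUB [Call CNT [V 0], Call PF [V 0]]"

lemma iter_add: "iter (\<lambda>k r. Suc r) n a = a + n" by (induction n) auto
lemma iter_pred: "iter (\<lambda>k r. k) n a = (if n = 0 then a else n - 1)" by (induction n) auto
lemma iter_sub: "iter (\<lambda>k r. r - Suc 0) n a = a - n" by (induction n) auto
lemma iter_mul: "iter (\<lambda>k r. r + a) n 0 = a * n" by (induction n) auto
lemma iter_const: "iter (\<lambda>k r. b) n a = (if n = 0 then a else b)" by (induction n) auto
lemma iter_sum: "iter (\<lambda>k r. r + f k) n a = a + (\<Sum>k<n. f k)" by (induction n) auto

lemma ADD_ev[simp]: "peval ADD [a, b] = a + b" by (simp add: ADD_def iter_add)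
lemma PRED_ev[simp]: "peval PRED [a] = a - 1" by (simp add: PRED_def iter_pred)
lemma SUB_ev[simp]: "peval SUB [a, b] = a - b" by (simp add: SUB_def iter_sub)
lemma MUL_ev[simp]: "peval MUL [a, b] = a * b" by (simp add: MUL_def iter_mul mult.commute)
lemma IFZ_ev[simp]: "peval IFZ [c, a, b] = (if c = 0 then a else b)" by (simp add: IFZ_def iter_const)
lemma TRI_ev[simp]: "peval TRI [n] = triangle n"
proof -
  have "peval TRI [n] = (\<Sum>k<Suc n. k)" by (simp add: TRI_def iter_sum)
  also have "\<dots> = triangle n" by (induction n) auto
  finally show ?thesis .
qed
lemma PE_ev[simp]: "peval PE [a, b] = pr a b" by (simp add: PE_def pr_def prod_encode_def)
lemma LEQ_ev[simp]: "peval LEQ [a, b] = (if a \<le> b then 1 else 0)" by (simp add: LEQ_def)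

lemma triangle_mono: "a \<le> b \<Longrightarrow> triangle a \<le> triangle b"
  by (induction b) (auto simp: le_Suc_eq)

lemma count_lemma: "s \<le> n \<Longrightarrow> (\<Sum>k<n. if k < s then 1 else 0) = (s::nat)"
proof (induction n)
  case 0 then show ?case by simp
next
  case (Suc n)
  show ?case
  proof (cases "s \<le> n")
    case True then show ?thesis using Suc by simp
  next
    case False
    then have "s = Suc n" using Suc by simp
    then show ?thesis by (simp add: sum.lessThan_Suc)
  qed
qed

lemma CNT_ev: "peval CNT [n] = fst (prod_decode n) + snd (prod_decode n)"
proof -
  obtain a b where ab: "prod_decode n = (a, b)" by (cases "prod_decode n")
  have n: "n = triangle (a + b) + a" using ab prod_decode_inverse[of n] by (simp add: prod_encode_def)
  have eq: "(triangle (Suc k) \<le> n) = (k < a + b)" for k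
  proof
    assume "triangle (Suc k) \<le> n"
    show "k < a + b"
    proof (rule ccontr)
      assume "\<not> k < a + b"
      then have "triangle (Suc (a + b)) \<le> triangle (Suc k)" by (intro triangle_mono) simp
      then show False using \<open>triangle (Suc k) \<le> n\<close> n by simp
    qed
  next
    assume "k < a + b"
    then have "triangle (Suc k) \<le> triangle (a + b)" by (intro triangle_mono) simp
    then show "triangle (Suc k) \<le> n" using n by simp
  qed
  have s: "a + b \<le> n"
  proof -
    have "a + b \<le> triangle (a + b)" by (induction "a+b" arbitrary: a b) (auto, metis add_Suc_right triangle_Suc add_0 le_add2)
    then show ?thesis using n by simp
  qed
  have "peval CNT [n] = (\<Sum>k<n. if triangle (Suc k) \<le> n then 1 else 0)"
    by (simp add: CNT_def iter_sum)
  also have "\<dots> = (\<Sum>k<n. if k < a + b then 1 else 0)" using eq by simp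
  also have "\<dots> = a + b" using s by (rule count_lemma)
  finally show ?thesis using ab by simp
qed

lemma PF_ev[simp]: "peval PF [n] = pfst n" and PS_ev[simp]: "peval PS [n] = psnd n"
proof -
  obtain a b where ab: "prod_decode n = (a, b)" by (cases "prod_decode n")
  have n: "n = triangle (a + b) + a" using ab prod_decode_inverse[of n] by (simp add: prod_encode_def)
  show "peval PF [n] = pfst n" using ab n by (simp add: PF_def CNT_ev pfst_def)
  then show "peval PS [n] = psnd n" using ab by (simp add: PS_def CNT_ev pfst_def psnd_def)
qed



definition cp :: "(nat \<Rightarrow> nat) \<Rightarrow> bool" where "cp f \<longleftrightarrow> (\<exists>P. \<forall>x. peval P [x] = f x)"
definition cpb :: "(nat \<Rightarrow> bool) \<Rightarrow> bool" where "cpb P \<longleftrightarrow> cp (\<lambda>x. if P x then 1 else 0)"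

lemma num_ev: "peval ((S ^^ c) Z) env = c" by (induction c) auto

lemma cp_const: "cp (\<lambda>x. c)"
  unfolding cp_def by (rule exI[of _ "(S ^^ c) Z"]) (simp add: num_ev)

lemma cp_id: "cp (\<lambda>x. x)"
  unfolding cp_def by (rule exI[of _ "V 0"]) simp

lemma cp_comp: "cp h \<Longrightarrow> cp f \<Longrightarrow> cp (\<lambda>x. h (f x))"
  unfolding cp_def
  apply clarify
  subgoal for P Q by (rule exI[of _ "Call P [Call Q [V 0]]"]) simp
  done

lemma cp_prog2: "(\<And>a b. peval P [a, b] = h a b) \<Longrightarrow> cp f \<Longrightarrow> cp g \<Longrightarrow> cp (\<lambda>x. h (f x) (g x))"
  unfolding cp_def
  apply clarify
  subgoal for Q1 Q2 by (rule exI[of _ "Call P [Call Q1 [V 0], Call Q2 [V 0]]"]) simp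
  done

lemma cp_prog1: "(\<And>a. peval P [a] = h a) \<Longrightarrow> cp f \<Longrightarrow> cp (\<lambda>x. h (f x))"
  unfolding cp_def
  apply clarify
  subgoal for Q1 by (rule exI[of _ "Call P [Call Q1 [V 0]]"]) simp
  done

lemma cp_add: "cp f \<Longrightarrow> cp g \<Longrightarrow> cp (\<lambda>x. f x + g x)" by (rule cp_prog2[OF ADD_ev])
lemma cp_sub: "cp f \<Longrightarrow> cp g \<Longrightarrow> cp (\<lambda>x. f x - g x)" by (rule cp_prog2[OF SUB_ev])
lemma cp_mul: "cp f \<Longrightarrow> cp g \<Longrightarrow> cp (\<lambda>x. f x * g x)" by (rule cp_prog2[OF MUL_ev])
lemma cp_pr: "cp f \<Longrightarrow> cp g \<Longrightarrow> cp (\<lambda>x. pr (f x) (g x))" by (rule cp_prog2[OF PE_ev])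
lemma cp_pfst: "cp f \<Longrightarrow> cp (\<lambda>x. pfst (f x))" by (rule cp_prog1[OF PF_ev])
lemma cp_psnd: "cp f \<Longrightarrow> cp (\<lambda>x. psnd (f x))" by (rule cp_prog1[OF PS_ev])
lemma cp_Suc: "cp f \<Longrightarrow> cp (\<lambda>x. Suc (f x))"
  using cp_add[OF _ cp_const[of 1]] by simp

lemma cp_if: "cpb P \<Longrightarrow> cp f \<Longrightarrow> cp g \<Longrightarrow> cp (\<lambda>x. if P x then f x else g x)"
  unfolding cpb_def cp_def
  apply clarify
  subgoal for Q0 Q1 Q2 by (rule exI[of _ "Call IFZ [Call Q0 [V 0], Call Q2 [V 0], Call Q1 [V 0]]"]) simp
  done

lemma cp_iter:
  assumes "cp t" "cp z" "cp (\<lambda>p. s (pfst p) (pfst (psnd p)) (psnd (psnd p)))"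
  shows "cp (\<lambda>x. iter (\<lambda>k r. s k r x) (t x) (z x))"
proof -
  obtain Pt Pz Ps where t: "\<And>x. peval Pt [x] = t x" and z: "\<And>x. peval Pz [x] = z x"
     and s: "\<And>p. peval Ps [p] = s (pfst p) (pfst (psnd p)) (psnd (psnd p))"
    using assms unfolding cp_def by metis
  have "peval (R (Call Pt [V 0]) (Call Pz [V 0]) (Call Ps [Call PE [V 0, Call PE [V 1, V 2]]])) [x] =
    iter (\<lambda>k r. s k r x) (t x) (z x)" for x
    by (simp add: t z s)
  then show ?thesis unfolding cp_def by blast
qed

lemma cpb_le: "cp f \<Longrightarrow> cp g \<Longrightarrow> cpb (\<lambda>x. f x \<le> g x)"
  unfolding cpb_def by (rule cp_prog2[OF LEQ_ev])

lemma cpb_cp: "cpb P \<Longrightarrow> cp (\<lambda>x. if P x then 1 else 0)" by (simp add: cpb_def)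

lemma cpb_const: "cpb (\<lambda>x. Q)"
  unfolding cpb_def by (rule cp_const)

lemma cp_ext: "cp f \<Longrightarrow> (\<And>x. f x = g x) \<Longrightarrow> cp g"
proof -
  assume "cp f" "\<And>x. f x = g x"
  then have "f = g" by blast
  then show "cp g" using \<open>cp f\<close> by simp
qed

lemma cpb_ext: "cpb P \<Longrightarrow> (\<And>x. P x = Q x) \<Longrightarrow> cpb Q"
  unfolding cpb_def by (erule cp_ext) simp

lemma cpb_not: "cpb P \<Longrightarrow> cpb (\<lambda>x. \<not> P x)"
  unfolding cpb_def by (rule cp_ext[OF cp_if[of P "\<lambda>x. 0" "\<lambda>x. 1"]]) (auto simp: cpb_def cp_const)

lemma cpb_conj: "cpb P \<Longrightarrow> cpb Q \<Longrightarrow> cpb (\<lambda>x. P x \<and> Q x)"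
  unfolding cpb_def by (rule cp_ext[OF cp_if[of P "\<lambda>x. if Q x then 1 else 0" "\<lambda>x. 0"]]) (auto simp: cpb_def cp_const)

lemma cpb_disj: "cpb P \<Longrightarrow> cpb Q \<Longrightarrow> cpb (\<lambda>x. P x \<or> Q x)"
  unfolding cpb_def by (rule cp_ext[OF cp_if[of P "\<lambda>x. 1" "\<lambda>x. if Q x then 1 else 0"]]) (auto simp: cpb_def cp_const)

lemma cpb_imp: "cpb P \<Longrightarrow> cpb Q \<Longrightarrow> cpb (\<lambda>x. P x \<longrightarrow> Q x)"
  using cpb_disj[OF cpb_not] by simp

lemma cpb_iff: "cpb P \<Longrightarrow> cpb Q \<Longrightarrow> cpb (\<lambda>x. P x \<longleftrightarrow> Q x)"
proof -
  assume "cpb P" "cpb Q"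
  then have "cpb (\<lambda>x. (P x \<longrightarrow> Q x) \<and> (Q x \<longrightarrow> P x))" by (intro cpb_conj cpb_imp)
  then show ?thesis by (rule cpb_ext) blast
qed

lemma cpb_eq: "cp f \<Longrightarrow> cp g \<Longrightarrow> cpb (\<lambda>x. f x = g x)"
  by (rule cpb_ext[OF cpb_conj[OF cpb_le cpb_le, of f g g f]]) auto

lemma cpb_less: "cp f \<Longrightarrow> cp g \<Longrightarrow> cpb (\<lambda>x. f x < g x)"
  by (rule cpb_ext[OF cpb_not[OF cpb_le, of g f]]) auto

lemma cpb_comp: "cpb P \<Longrightarrow> cp f \<Longrightarrow> cpb (\<lambda>x. P (f x))"
  unfolding cpb_def by (rule cp_comp[of "\<lambda>y. if P y then 1 else 0"])

lemma iter_ex: "(c::nat) \<noteq> 0 \<Longrightarrow> (iter (\<lambda>k r. if P k then c else r) n 0 \<noteq> 0) = (\<exists>k<n. P k)"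
  by (induction n) (auto simp: less_Suc_eq)

lemma cpb_ex:
  assumes "cp t" "cpb (\<lambda>p. P (pfst p) (psnd p))"
  shows "cpb (\<lambda>x. \<exists>k<t x. P k x)"
proof -
  have a: "cpb (\<lambda>p. P (pfst p) (psnd (psnd p)))"
    using cpb_comp[OF assms(2), of "\<lambda>p. pr (pfst p) (psnd (psnd p))"]
    by (simp add: cp_pr cp_pfst cp_psnd cp_id)
  have "cp (\<lambda>x. iter (\<lambda>k r. if P k x then 1 else r) (t x) 0)"
    by (rule cp_iter[OF assms(1) cp_const]) (rule cp_if[OF a cp_const cp_pfst[OF cp_psnd[OF cp_id]]])
  then have "cpb (\<lambda>x. \<not> iter (\<lambda>k r. if P k x then 1 else r) (t x) 0 = 0)"
    by (intro cpb_eq cp_const cpb_not)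
  then show ?thesis by (rule cpb_ext) (rule iter_ex, simp)
qed

lemma cpb_all:
  assumes "cp t" "cpb (\<lambda>p. P (pfst p) (psnd p))"
  shows "cpb (\<lambda>x. \<forall>k<t x. P k x)"
proof -
  have "cpb (\<lambda>x. \<not> (\<exists>k<t x. \<not> P k x))" by (intro cpb_not cpb_ex assms cpb_not)
  then show ?thesis by (rule cpb_ext) simp
qed

lemma cpb_ex_le:
  assumes "cp t" "cpb (\<lambda>p. P (pfst p) (psnd p))"
  shows "cpb (\<lambda>x. \<exists>k\<le>t x. P k x)"
  by (rule cpb_ext[OF cpb_ex[OF cp_Suc[OF assms(1)] assms(2)]]) (simp add: less_Suc_eq_le)

lemma cpb_all_le:
  assumes "cp t" "cpb (\<lambda>p. P (pfst p) (psnd p))"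
  shows "cpb (\<lambda>x. \<forall>k\<le>t x. P k x)"
  by (rule cpb_ext[OF cpb_all[OF cp_Suc[OF assms(1)] assms(2)]]) (simp add: less_Suc_eq_le)

lemma iter_prod: "iter (\<lambda>k r. r * f k) n a = a * (\<Prod>k<n. f k)" by (induction n) auto

lemma cp_sum:
  assumes "cp t" "cp (\<lambda>p. f (pfst p) (psnd p))"
  shows "cp (\<lambda>x. \<Sum>k<t x. f k x)"
proof -
  have a: "cp (\<lambda>p. f (pfst p) (psnd (psnd p)))"
    using cp_comp[OF assms(2), of "\<lambda>p. pr (pfst p) (psnd (psnd p))"]
    by (simp add: cp_pr cp_pfst cp_psnd cp_id)
  have "cp (\<lambda>x. iter (\<lambda>k r. r + f k x) (t x) 0)"
    by (rule cp_iter[OF assms(1) cp_const]) (rule cp_add[OF cp_pfst[OF cp_psnd[OF cp_id]] a])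
  then show ?thesis by (rule cp_ext) (simp add: iter_sum)
qed

lemma cp_prod:
  assumes "cp t" "cp (\<lambda>p. f (pfst p) (psnd p))"
  shows "cp (\<lambda>x. \<Prod>k<t x. f k x)"
proof -
  have a: "cp (\<lambda>p. f (pfst p) (psnd (psnd p)))"
    using cp_comp[OF assms(2), of "\<lambda>p. pr (pfst p) (psnd (psnd p))"]
    by (simp add: cp_pr cp_pfst cp_psnd cp_id)
  have "cp (\<lambda>x. iter (\<lambda>k r. r * f k x) (t x) 1)"
    by (rule cp_iter[OF assms(1) cp_const]) (rule cp_mul[OF cp_pfst[OF cp_psnd[OF cp_id]] a])
  then show ?thesis by (rule cp_ext) (simp add: iter_prod)
qed

lemma cp_pow: "cp f \<Longrightarrow> cp g \<Longrightarrow> cp (\<lambda>x. f x ^ g x)"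
proof -
  assume "cp f" "cp g"
  have "cp (\<lambda>x. \<Prod>k<g x. f x)"
    by (rule cp_prod[OF \<open>cp g\<close>]) (rule cp_comp[OF \<open>cp f\<close> cp_psnd[OF cp_id]])
  then show ?thesis by (rule cp_ext) simp
qed

lemmas cpI = cp_const cp_id cp_add cp_sub cp_mul cp_pr cp_pfst cp_psnd cp_Suc cp_if cp_pow
  cpb_le cpb_const cpb_not cpb_conj cpb_disj cpb_imp cpb_iff cpb_eq cpb_less cpb_ex cpb_all cpb_ex_le cpb_all_le
  cp_sum cp_prod

lemma "cp (\<lambda>x. if (\<exists>k<pfst x. k * k = psnd x) then x + 3 else (\<Sum>j<x. j * pfst x))"
  by (intro cpI)



abbreviation le where "le \<equiv> list_encode"
abbreviation ld where "ld \<equiv> list_decode"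

definition ctl :: "nat \<Rightarrow> nat" where "ctl c = psnd (c - 1)"
definition chd :: "nat \<Rightarrow> nat" where "chd c = pfst (c - 1)"
definition cdrop :: "nat \<Rightarrow> nat \<Rightarrow> nat" where "cdrop k c = iter (\<lambda>j r. ctl r) k c"
definition cnth :: "nat \<Rightarrow> nat \<Rightarrow> nat" where "cnth c k = chd (cdrop k c)"
definition clen :: "nat \<Rightarrow> nat" where "clen c = (\<Sum>k<c. if cdrop k c = 0 then 0 else 1)"
definition ccons :: "nat \<Rightarrow> nat \<Rightarrow> nat" where "ccons a c = Suc (pr a c)"
definition clast :: "nat \<Rightarrow> nat" where "clast c = cnth c (clen c - 1)"
definition ctab :: "(nat \<Rightarrow> nat) \<Rightarrow> nat \<Rightarrow> nat" where
  "ctab f n = iter (\<lambda>j acc. ccons (f (n - Suc j)) acc) n 0"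
definition ctake :: "nat \<Rightarrow> nat \<Rightarrow> nat" where "ctake k c = ctab (\<lambda>j. cnth c j) k"

lemma ctl_le[simp]: "ctl (le xs) = le (tl xs)"
proof -
  have "prod_decode 0 = (0, 0)" by (simp add: prod_decode_def prod_decode_aux.simps)
  then show ?thesis by (cases xs) (simp_all add: ctl_def psnd_def)
qed
lemma chd_le[simp]: "chd (le (x # xs)) = x"
  by (simp add: chd_def pfst_def)
lemma ccons_le[simp]: "ccons a (le xs) = le (a # xs)"
  by (simp add: ccons_def pr_def)
lemma cdrop_le[simp]: "cdrop k (le xs) = le (drop k xs)"
  unfolding cdrop_def by (induction k) (simp_all add: drop_Suc tl_drop)
lemma cnth_le[simp]: "k < length xs \<Longrightarrow> cnth (le xs) k = xs ! k"
proof -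
  assume "k < length xs"
  then have "drop k xs = xs ! k # drop (Suc k) xs" by (rule Cons_nth_drop_Suc[symmetric])
  then show ?thesis unfolding cnth_def cdrop_le by (simp add: chd_def pfst_def)
qed
lemma length_le_code: "length xs \<le> le xs"
  by (induction xs) (auto simp: le_prod_encode_2 intro: le_trans)
lemma le_eq_0[simp]: "le xs = 0 \<longleftrightarrow> xs = []"
  by (cases xs) auto
lemma clen_le[simp]: "clen (le xs) = length xs"
proof -
  have "clen (le xs) = (\<Sum>k<le xs. if k < length xs then 1 else 0)"
    unfolding clen_def by (intro sum.cong) auto
  also have "\<dots> = length xs" using length_le_code by (rule count_lemma)
  finally show ?thesis .
qed
lemma clast_le[simp]: "xs \<noteq> [] \<Longrightarrow> clast (le xs) = last xs"
  by (simp add: clast_def last_conv_nth)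

lemma ctab_aux: "m \<le> n \<Longrightarrow> iter (\<lambda>j acc. ccons (f (n - Suc j)) acc) m 0 = le (map f [n - m..<n])"
proof (induction m)
  case 0 then show ?case by simp
next
  case (Suc m)
  then have "[n - Suc m..<n] = (n - Suc m) # [n - m..<n]"
    by (simp add: Suc_diff_Suc upt_conv_Cons)
  then show ?case using Suc by simp
qed

lemma ctab_le[simp]: "ctab f n = le (map f [0..<n])"
  unfolding ctab_def using ctab_aux[of n n f] by simp

lemma ctake_le[simp]: "k \<le> length xs \<Longrightarrow> ctake k (le xs) = le (take k xs)"
proof -
  assume "k \<le> length xs"
  then have "map (cnth (le xs)) [0..<k] = take k xs" by (intro nth_equalityI) auto
  then show ?thesis unfolding ctake_def by simp
qed

lemma cnth_tab[simp]: "k < n \<Longrightarrow> cnth (ctab f n) k = f k" by simp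
lemma clen_tab[simp]: "clen (ctab f n) = n" by simp

lemma cp_ctl: "cp f \<Longrightarrow> cp (\<lambda>x. ctl (f x))" unfolding ctl_def by (intro cpI)
lemma cp_chd: "cp f \<Longrightarrow> cp (\<lambda>x. chd (f x))" unfolding chd_def by (intro cpI)
lemma cp_ccons: "cp f \<Longrightarrow> cp g \<Longrightarrow> cp (\<lambda>x. ccons (f x) (g x))" unfolding ccons_def by (intro cpI)
lemma cp_cdrop: "cp f \<Longrightarrow> cp g \<Longrightarrow> cp (\<lambda>x. cdrop (f x) (g x))"
  unfolding cdrop_def by (rule cp_iter) (assumption | intro cpI cp_ctl)+
lemma cp_cnth: "cp f \<Longrightarrow> cp g \<Longrightarrow> cp (\<lambda>x. cnth (f x) (g x))"
  unfolding cnth_def by (intro cp_chd cp_cdrop)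
lemma cp_clen: assumes "cp f" shows "cp (\<lambda>x. clen (f x))"
  unfolding clen_def by (intro cpI cp_cdrop cp_comp[OF assms] assms)
lemma cp_clast: "cp f \<Longrightarrow> cp (\<lambda>x. clast (f x))"
  unfolding clast_def by (intro cpI cp_cnth cp_clen)
lemma cp_ctab: "cp n \<Longrightarrow> cp (\<lambda>p. F (pfst p) (psnd p)) \<Longrightarrow> cp (\<lambda>x. ctab (\<lambda>j. F j x) (n x))"
proof -
  assume a: "cp n" "cp (\<lambda>p. F (pfst p) (psnd p))"
  have "cp (\<lambda>p. F (n (psnd (psnd p)) - Suc (pfst p)) (psnd (psnd p)))"
    using cp_comp[OF a(2), of "\<lambda>p. pr (n (psnd (psnd p)) - Suc (pfst p)) (psnd (psnd p))"]
    by (simp add: cpI cp_comp[OF a(1)])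
  then show ?thesis unfolding ctab_def
    by (intro cp_iter a cpI cp_ccons)
qed
lemma cp_ctake: "cp f \<Longrightarrow> cp g \<Longrightarrow> cp (\<lambda>x. ctake (f x) (g x))"
proof -
  assume a: "cp f" "cp g"
  have "cp (\<lambda>p. g (psnd p))" by (rule cp_comp[OF a(2) cp_psnd[OF cp_id]])
  then show ?thesis unfolding ctake_def using a by (intro cp_ctab cp_cnth cpI)
qed

lemmas cpI2 = cpI cp_ctl cp_chd cp_ccons cp_cdrop cp_cnth cp_clen cp_clast cp_ctake



definition tab :: "(nat \<Rightarrow> nat \<Rightarrow> nat \<Rightarrow> nat) \<Rightarrow> nat \<Rightarrow> nat \<Rightarrow> nat" where
  "tab F N x = iter (\<lambda>k T. ctab (\<lambda>z. F T z x) (Suc N)) (Suc N) 0"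

lemma tab_correct:
  assumes "\<And>z T. z \<in> G \<Longrightarrow> z \<le> N \<Longrightarrow> (\<And>z'. z' \<in> G \<Longrightarrow> z' < z \<Longrightarrow> cnth T z' = h z') \<Longrightarrow> F T z x = h z"
  shows "z \<in> G \<Longrightarrow> z \<le> N \<Longrightarrow> cnth (tab F N x) z = h z"
proof -
  have "\<forall>z\<in>G. z < k \<longrightarrow> z \<le> N \<longrightarrow> cnth (iter (\<lambda>k T. ctab (\<lambda>z. F T z x) (Suc N)) k 0) z = h z" for k
  proof (induction k)
    case 0 then show ?case by simp
  next
    case (Suc k)
    show ?case
    proof (intro ballI impI)
      fix z assume z: "z \<in> G" "z < Suc k" "z \<le> N"
      have "cnth (iter (\<lambda>k T. ctab (\<lambda>z. F T z x) (Suc N)) (Suc k) 0) z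
          = F (iter (\<lambda>k T. ctab (\<lambda>z. F T z x) (Suc N)) k 0) z x"
        using z by (simp del: ctab_le)
      also have "\<dots> = h z"
        using z Suc.IH by (intro assms) auto
      finally show "cnth (iter (\<lambda>k T. ctab (\<lambda>z. F T z x) (Suc N)) (Suc k) 0) z = h z" .
    qed
  qed
  then show "z \<in> G \<Longrightarrow> z \<le> N \<Longrightarrow> ?thesis" unfolding tab_def
    using le_imp_less_Suc by blast
qed

lemma cp_tab:
  assumes F: "cp (\<lambda>p. F (pfst p) (pfst (psnd p)) (psnd (psnd p)))" and N: "cp N" and X: "cp X"
  shows "cp (\<lambda>y. tab F (N y) (X y))"
proof -
  have a: "cp (\<lambda>q. F (pfst (psnd (psnd q))) (pfst q) (X (psnd (psnd (psnd q)))))"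
    using cp_comp[OF F, of "\<lambda>q. pr (pfst (psnd (psnd q))) (pr (pfst q) (X (psnd (psnd (psnd q)))))"]
    by (simp add: cpI cp_comp[OF X])
  have "cp (\<lambda>p. ctab (\<lambda>z. F (pfst (psnd p)) z (X (psnd (psnd p)))) (Suc (N (psnd (psnd p)))))"
  proof -
    have n: "cp (\<lambda>p. Suc (N (psnd (psnd p))))" by (intro cpI cp_comp[OF N])
    show ?thesis by (rule cp_ctab[OF n a])
  qed
  then show ?thesis unfolding tab_def
    by (intro cp_iter cpI cp_comp[OF N])
qed



lemma prod_encode_mono: "a \<le> c \<Longrightarrow> b \<le> d \<Longrightarrow> prod_encode (a, b) \<le> prod_encode (c, d)"
  unfolding prod_encode_def by (simp add: add_mono triangle_mono)

lemma le_replicate_bound: "length xs \<le> Kb \<Longrightarrow> \<forall>x\<in>set xs. x \<le> M \<Longrightarrow> le xs \<le> le (replicate Kb M)"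
proof (induction xs arbitrary: Kb)
  case Nil then show ?case by simp
next
  case (Cons x xs)
  then obtain Kb' where Kb: "Kb = Suc Kb'" by (cases Kb) auto
  then show ?case using Cons by (simp add: prod_encode_mono)
qed

definition pathl :: "(nat \<Rightarrow> nat \<Rightarrow> bool) \<Rightarrow> nat list \<Rightarrow> nat \<Rightarrow> nat \<Rightarrow> bool" where
  "pathl r xs u v \<longleftrightarrow> 2 \<le> length xs \<and> hd xs = u \<and> last xs = v \<and> (\<forall>j. Suc j < length xs \<longrightarrow> r (xs ! j) (xs ! Suc j))"

lemma pathl_tranclp: "pathl r xs u v \<Longrightarrow> r\<^sup>+\<^sup>+ u v"
proof (induction xs arbitrary: u)
  case Nil then show ?case by (simp add: pathl_def)
next
  case (Cons a xs)
  then have u: "a = u" and l: "2 \<le> Suc (length xs)" by (auto simp: pathl_def)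
  show ?case
  proof (cases "length xs = 1")
    case True
    then obtain b where "xs = [b]" by (cases xs) auto
    then show ?thesis using Cons.prems by (auto simp: pathl_def)
  next
    case False
    then have xs: "xs \<noteq> []" "2 \<le> length xs" using l by (cases xs, auto)+
    have r1: "r u (hd xs)" using Cons.prems xs u by (auto simp: pathl_def hd_conv_nth)
    have "pathl r xs (hd xs) v" unfolding pathl_def
    proof (intro conjI allI impI)
      show "2 \<le> length xs" "hd xs = hd xs" by (simp_all add: xs)
      show "last xs = v" using Cons.prems xs by (simp add: pathl_def)
      fix j assume "Suc j < length xs"
      then have "Suc (Suc j) < length (a # xs)" by simp
      then have "r ((a # xs) ! Suc j) ((a # xs) ! Suc (Suc j))" using Cons.prems unfolding pathl_def by blast
      then show "r (xs ! j) (xs ! Suc j)" by simp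
    qed
    then have "r\<^sup>+\<^sup>+ (hd xs) v" by (rule Cons.IH)
    then show ?thesis using r1 by auto
  qed
qed

lemma tranclp_pathl:
  assumes bnd: "\<And>u v. r u v \<Longrightarrow> u \<le> B \<and> v \<le> B" and t: "r\<^sup>+\<^sup>+ u v"
  shows "\<exists>xs. length xs \<le> Suc ((B + 1) * (B + 1)) \<and> (\<forall>x\<in>set xs. x \<le> B) \<and> pathl r xs u v"
proof -
  define Rs where "Rs = {(a, b). r a b}"
  have sub: "Rs \<subseteq> {..B} \<times> {..B}" using bnd by (auto simp: Rs_def)
  then have fin: "finite Rs" by (rule finite_subset) auto
  have card: "card Rs \<le> (B + 1) * (B + 1)"
    using card_mono[OF _ sub] by (simp add: card_cartesian_product)
  have "(u, v) \<in> Rs\<^sup>+" using t unfolding Rs_def by (simp add: tranclp_unfold)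
  then obtain n where n: "0 < n" "n \<le> card Rs" "(u, v) \<in> Rs ^^ n"
    using trancl_finite_eq_relpow[OF fin] by auto
  then obtain f where f: "f 0 = u" "f n = v" "\<forall>i<n. (f i, f (Suc i)) \<in> Rs"
    using relpow_fun_conv by metis
  define xs where "xs = map f [0..<Suc n]"
  have "\<forall>x\<in>set xs. x \<le> B"
  proof
    fix x assume "x \<in> set xs"
    then obtain i where i: "i \<le> n" "x = f i" unfolding xs_def
      by (metis atLeastLessThan_iff imageE less_Suc_eq_le set_map set_upt)
    show "x \<le> B"
    proof (cases i)
      case 0 then show ?thesis using f(3) n(1) i bnd by (auto simp: Rs_def)
    next
      case (Suc j) then show ?thesis using f(3)[rule_format, of j] i bnd by (auto simp: Rs_def)
    qed
  qed
  moreover have "length xs \<le> Suc ((B + 1) * (B + 1))" using n card by (simp add: xs_def)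
  moreover have "pathl r xs u v" using f n unfolding pathl_def xs_def
    by (auto simp: Rs_def hd_map last_map nth_Cons' simp del: upt_Suc)
  ultimately show ?thesis by blast
qed

definition PB :: "nat \<Rightarrow> nat" where "PB B = le (replicate (Suc ((B + 1) * (B + 1))) B)"

definition pathc :: "(nat \<Rightarrow> nat \<Rightarrow> bool) \<Rightarrow> nat \<Rightarrow> nat \<Rightarrow> nat \<Rightarrow> bool" where
  "pathc r p u v \<longleftrightarrow> 2 \<le> clen p \<and> cnth p 0 = u \<and> cnth p (clen p - 1) = v \<and>
     (\<forall>j<clen p - 1. r (cnth p j) (cnth p (Suc j)))"

lemma pathc_pathl: "pathc r p u v = pathl r (ld p) u v"
proof -
  have "pathc r (le xs) u v = pathl r xs u v" for xs
  proof (cases "2 \<le> length xs")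
    case True
    then have "xs \<noteq> []" by auto
    then show ?thesis using True by (auto simp: pathc_def pathl_def hd_conv_nth last_conv_nth)
  qed (auto simp: pathc_def pathl_def)
  from this[of "ld p"] show ?thesis by simp
qed

lemma tranclp_pathc:
  assumes bnd: "\<And>u v. r u v \<Longrightarrow> u \<le> B \<and> v \<le> B"
  shows "r\<^sup>+\<^sup>+ u v \<longleftrightarrow> (\<exists>p\<le>PB B. pathc r p u v)"
proof
  assume "r\<^sup>+\<^sup>+ u v"
  then obtain xs where xs: "length xs \<le> Suc ((B + 1) * (B + 1))" "\<forall>x\<in>set xs. x \<le> B" "pathl r xs u v"
    using tranclp_pathl[OF bnd] by blast
  show "\<exists>p\<le>PB B. pathc r p u v"
    using le_replicate_bound[OF xs(1,2)] xs(3) by (intro exI[of _ "le xs"]) (simp add: pathc_pathl PB_def)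
next
  assume "\<exists>p\<le>PB B. pathc r p u v"
  then show "r\<^sup>+\<^sup>+ u v" by (auto simp: pathc_pathl intro: pathl_tranclp)
qed

lemma cp_PB: "cp f \<Longrightarrow> cp (\<lambda>x. PB (f x))"
proof -
  assume f: "cp f"
  have "PB B = ctab (\<lambda>j. B) (Suc ((B + 1) * (B + 1)))" for B
    by (simp add: PB_def map_replicate_const)
  then show ?thesis
    by (simp only:) (intro cp_ctab cpI cp_comp[OF f] f)
qed



definition chainG :: "isrl \<Rightarrow> nat list list \<Rightarrow> bool" where
  "chainG IS gs \<longleftrightarrow> (\<forall>j. Suc j < length gs \<longrightarrow> tG IS (gs ! j) (gs ! Suc j))"

definition validG :: "isrl \<Rightarrow> nat list list \<Rightarrow> bool" where
  "validG IS gs \<longleftrightarrow> gs \<noteq> [] \<and> (tG IS)\<^sup>*\<^sup>* (init IS) (hd gs) \<and> chainG IS gs"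

definition simG :: "isrl \<Rightarrow> nat \<Rightarrow> nat list list \<Rightarrow> nat list list \<Rightarrow> bool" where
  "simG IS i gs gs' \<longleftrightarrow> validG IS gs \<and> validG IS gs' \<and> length gs = length gs' \<and>
     (\<forall>j<length gs. gs ! j ! i = gs' ! j ! i)"

fun semG :: "isrl \<Rightarrow> form \<Rightarrow> nat list list \<Rightarrow> bool" where
  "semG IS Pi gs = (length gs = 1)"
| "semG IS (Prop p) gs = (gs \<in> lang (lam IS ! p))"
| "semG IS (Neg a) gs = (\<not> semG IS a gs)"
| "semG IS (And a b) gs = (semG IS a gs \<and> semG IS b gs)"
| "semG IS (K i a) gs = (\<forall>gs'. simG IS i gs gs' \<longrightarrow> semG IS a gs')"
| "semG IS (C G a) gs = (\<forall>gs'. (\<lambda>x y. \<exists>i\<in>set G. simG IS i x y)\<^sup>+\<^sup>+ gs gs' \<longrightarrow> semG IS a gs')"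
| "semG IS (DiaA a) gs = (\<exists>gs'. validG IS gs' \<and> length gs' \<le> length gs + fIS IS a \<and>
      hd gs' = last gs \<and> semG IS a gs')"
| "semG IS (DiaBbar a) gs = (\<exists>gs'. validG IS gs' \<and> length gs' \<le> length gs + fIS IS a \<and>
      length gs < length gs' \<and> take (length gs) gs' = gs \<and> semG IS a gs')"
| "semG IS (DiaN a) gs = (\<exists>gs'. validG IS gs' \<and> length gs' \<le> length gs + fIS IS a \<and>
      tG IS (last gs) (hd gs') \<and> semG IS a gs')"

lemma isState_chain: "isState IS s \<Longrightarrow> chainG IS s"
  by (simp add: isState_def chainG_def)

lemma isState_reach: "isState IS s \<Longrightarrow> k < length s \<Longrightarrow> (tG IS)\<^sup>*\<^sup>* (init IS) (s ! k)"
proof (induction k)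
  case 0 then show ?case by (simp add: isState_def hd_conv_nth[symmetric])
next
  case (Suc k)
  then have "tG IS (s ! k) (s ! Suc k)" by (simp add: isState_def)
  then show ?case using Suc by (meson Suc_lessD rtranclp.rtrancl_into_rtrancl)
qed

lemma isState_last_reach: "isState IS s \<Longrightarrow> (tG IS)\<^sup>*\<^sup>* (init IS) (last s)"
  using isState_reach[of IS s "length s - 1"] by (simp add: isState_def last_conv_nth)

lemma isState_append:
  assumes s: "isState IS s" and c: "chainG IS (last s # xs)"
  shows "isState IS (s @ xs)"
proof -
  have ne: "s \<noteq> []" using s by (simp add: isState_def)
  have "tG IS ((s @ xs) ! j) ((s @ xs) ! Suc j)" if j: "Suc j < length (s @ xs)" for j
  proof (cases "Suc j < length s")
    case True then show ?thesis using s by (simp add: isState_def nth_append)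
  next
    case False
    show ?thesis
    proof (cases "j < length s")
      case True
      then have "j = length s - 1" using False by simp
      then show ?thesis using c j ne False
        by (auto simp: chainG_def nth_append last_conv_nth)
    next
      case False
      define m where "m = j - length s"
      have jm: "j = length s + m" using False by (simp add: m_def)
      have "Suc (Suc m) < length (last s # xs)" using j jm by simp
      then have "tG IS ((last s # xs) ! Suc m) ((last s # xs) ! Suc (Suc m))" using c unfolding chainG_def by blast
      then show ?thesis using jm by (simp add: nth_append)
    qed
  qed
  then show ?thesis using s ne by (simp add: isState_def)
qed

definition mkI :: "nat list list \<Rightarrow> nat list list \<Rightarrow> nat list list list" where
  "mkI s xs = map (\<lambda>k. s @ take k xs) [0..<Suc (length xs)]"

lemma chainG_take: "chainG IS xs \<Longrightarrow> chainG IS (take k xs)"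
  by (simp add: chainG_def)

lemma chainG_Cons_take: "chainG IS (a # xs) \<Longrightarrow> chainG IS (a # take k xs)"
  using chainG_take[of IS "a # xs" "Suc k"] by simp

lemma mkI_props:
  assumes s: "isState IS s" and c: "chainG IS (last s # xs)"
  shows "isInterval IS (mkI s xs)" "gseq (mkI s xs) = last s # xs" "hd (mkI s xs) = s"
    "length (mkI s xs) = Suc (length xs)"
proof -
  have ne: "s \<noteq> []" using s by (simp add: isState_def)
  have st: "isState IS (s @ take k xs)" for k
    by (rule isState_append[OF s chainG_Cons_take[OF c]])
  show "isInterval IS (mkI s xs)"
    unfolding isInterval_def mkI_def
  proof (intro conjI allI impI ballI)
    show "map (\<lambda>k. s @ take k xs) [0..<Suc (length xs)] \<noteq> []" by simp
    show "isState IS t" if "t \<in> set (map (\<lambda>k. s @ take k xs) [0..<Suc (length xs)])" for t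
      using that st by (auto simp del: upt_Suc)
    fix j assume j: "Suc j < length (map (\<lambda>k. s @ take k xs) [0..<Suc (length xs)])"
    then have j': "j < length xs" by simp
    then show "tr IS (map (\<lambda>k. s @ take k xs) [0..<Suc (length xs)] ! j) (map (\<lambda>k. s @ take k xs) [0..<Suc (length xs)] ! Suc j)"
      using j' st[of j] st[of "Suc j"] unfolding tr_def by (simp add: nth_append min_def del: upt_Suc)
  qed
  have "gseq (mkI s xs) ! k = (last s # xs) ! k" if "k < Suc (length xs)" for k
  proof (cases k)
    case 0 then show ?thesis using ne by (simp add: gseq_def mkI_def del: upt_Suc)
  next
    case (Suc m)
    then have "m < length xs" using that by simp
    then have "last (s @ take (Suc m) xs) = xs ! m" by (simp add: take_Suc_conv_app_nth)
    then show ?thesis using Suc that by (simp add: gseq_def mkI_def del: upt_Suc)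
  qed
  then show "gseq (mkI s xs) = last s # xs" by (intro nth_equalityI) (auto simp: gseq_def mkI_def)
  show "hd (mkI s xs) = s" by (simp add: mkI_def hd_map del: upt_Suc)
  show "length (mkI s xs) = Suc (length xs)" by (simp add: mkI_def)
qed

lemma interval_tl:
  assumes "isInterval IS I" "Suc 0 < length I"
  shows "isInterval IS (tl I)"
  using assms unfolding isInterval_def by (cases I) (auto simp: list.set_sel)

lemma run_exists: "(tG IS)\<^sup>*\<^sup>* (init IS) g \<Longrightarrow> \<exists>s. isState IS s \<and> last s = g"
proof (induction rule: rtranclp_induct)
  case base
  then show ?case by (intro exI[of _ "[init IS]"]) (simp add: isState_def)
next
  case (step y z)
  then obtain s where s: "isState IS s" "last s = y" by blast
  have "isState IS (s @ [z])" using s step by (intro isState_append) (simp_all add: chainG_def)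
  then show ?case by auto
qed

lemma interval_validG: "isInterval IS I \<Longrightarrow> validG IS (gseq I)"
proof -
  assume I: "isInterval IS I"
  then have ne: "I \<noteq> []" and st: "\<forall>s\<in>set I. isState IS s" unfolding isInterval_def by blast+
  have hI: "isState IS (hd I)" using ne st by simp
  have "hd (gseq I) = last (hd I)" using ne by (simp add: gseq_def hd_map)
  then have "(tG IS)\<^sup>*\<^sup>* (init IS) (hd (gseq I))"
    using isState_last_reach[OF hI] by simp
  moreover have "chainG IS (gseq I)"
    unfolding chainG_def
  proof (intro allI impI)
    fix j assume j: "Suc j < length (gseq I)"
    then have jI: "Suc j < length I" by (simp add: gseq_def)
    then have t: "tr IS (I ! j) (I ! Suc j)" using I unfolding isInterval_def by blast
    let ?s = "I ! Suc j"
    have sS: "isState IS ?s" and ls: "length ?s = Suc (length (I ! j))" and tk: "take (length (I ! j)) ?s = I ! j"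
      and sj: "isState IS (I ! j)"
      using t by (auto simp: tr_def)
    have nj: "I ! j \<noteq> []" using sj by (simp add: isState_def)
    define n where "n = length (I ! j)"
    have n0: "0 < n" using nj by (simp add: n_def)
    have "Suc (n - 1) < length ?s" using ls n0 by (simp add: n_def)
    then have "tG IS (?s ! (n - 1)) (?s ! Suc (n - 1))"
      using sS unfolding isState_def by blast
    moreover have "?s ! (n - 1) = last (I ! j)"
    proof -
      have "?s ! (n - 1) = take n ?s ! (n - 1)" using n0 by simp
      also have "\<dots> = (I ! j) ! (n - 1)" using tk by (simp add: n_def)
      also have "\<dots> = last (I ! j)" using nj by (simp add: n_def last_conv_nth)
      finally show ?thesis .
    qed
    moreover have "last ?s = ?s ! Suc (n - 1)"
    proof -
      have "?s \<noteq> []" using ls by auto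
      then show ?thesis using ls n0 by (simp add: n_def last_conv_nth)
    qed
    moreover have "j < length I" "Suc j < length I" using j by (auto simp: gseq_def)
    ultimately show "tG IS (gseq I ! j) (gseq I ! Suc j)"
      by (simp add: gseq_def)
  qed
  moreover have "gseq I \<noteq> []" using ne by (simp add: gseq_def)
  ultimately show ?thesis unfolding validG_def by blast
qed

lemma tr_tG: "tr IS s s' \<Longrightarrow> tG IS (last s) (last s')"
proof -
  assume t: "tr IS s s'"
  have sS: "isState IS s'" and ls: "length s' = Suc (length s)" and tk: "take (length s) s' = s"
    and sj: "isState IS s" using t by (auto simp: tr_def)
  have nj: "s \<noteq> []" using sj by (simp add: isState_def)
  define n where "n = length s"
  have n0: "0 < n" using nj by (simp add: n_def)
  have "Suc (n - 1) < length s'" using ls n0 by (simp add: n_def)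
  then have "tG IS (s' ! (n - 1)) (s' ! Suc (n - 1))"
    using sS unfolding isState_def by blast
  moreover have "s' ! (n - 1) = last s"
  proof -
    have "s' ! (n - 1) = take n s' ! (n - 1)" using n0 by simp
    also have "\<dots> = s ! (n - 1)" using tk by (simp add: n_def)
    also have "\<dots> = last s" using nj by (simp add: n_def last_conv_nth)
    finally show ?thesis .
  qed
  moreover have "last s' = s' ! Suc (n - 1)"
  proof -
    have "s' \<noteq> []" using ls by auto
    then show ?thesis using ls n0 by (simp add: n_def last_conv_nth)
  qed
  ultimately show ?thesis by simp
qed

lemma chainG_Cons: "chainG IS (a # xs) \<longleftrightarrow> (xs = [] \<or> tG IS a (hd xs)) \<and> chainG IS xs"
proof
  assume c: "chainG IS (a # xs)"
  have "xs = [] \<or> tG IS a (hd xs)"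
  proof (cases xs)
    case (Cons b ys)
    then have "Suc 0 < length (a # xs)" by simp
    then show ?thesis using c Cons unfolding chainG_def by fastforce
  qed simp
  moreover have "chainG IS xs" unfolding chainG_def
  proof (intro allI impI)
    fix j assume "Suc j < length xs"
    then have "Suc (Suc j) < length (a # xs)" by simp
    then show "tG IS (xs ! j) (xs ! Suc j)" using c unfolding chainG_def by fastforce
  qed
  ultimately show "(xs = [] \<or> tG IS a (hd xs)) \<and> chainG IS xs" by blast
next
  assume h: "(xs = [] \<or> tG IS a (hd xs)) \<and> chainG IS xs"
  show "chainG IS (a # xs)" unfolding chainG_def
  proof (intro allI impI)
    fix j assume j: "Suc j < length (a # xs)"
    show "tG IS ((a # xs) ! j) ((a # xs) ! Suc j)"
    proof (cases j)
      case 0 then show ?thesis using h j by (cases xs) auto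
    next
      case (Suc k) then show ?thesis using h j unfolding chainG_def by auto
    qed
  qed
qed

lemma chainG_drop: "chainG IS xs \<Longrightarrow> chainG IS (drop k xs)"
  unfolding chainG_def by (auto simp: add.commute[of k])

lemma chainG_junction: "chainG IS (ys @ xs) \<Longrightarrow> ys \<noteq> [] \<Longrightarrow> chainG IS (last ys # xs)"
proof -
  assume c: "chainG IS (ys @ xs)" and ne: "ys \<noteq> []"
  obtain zs z where ys: "ys = zs @ [z]" using ne by (metis rev_exhaust)
  have "drop (length ys - 1) (ys @ xs) = last ys # xs" by (simp add: ys)
  then show ?thesis using chainG_drop[OF c, of "length ys - 1"] by simp
qed

lemma gseq_length[simp]: "length (gseq I) = length I" by (simp add: gseq_def)
lemma gseq_append[simp]: "gseq (I @ J) = gseq I @ gseq J" by (simp add: gseq_def)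

lemma interval_append:
  assumes I: "isInterval IS I" and J: "isInterval IS J" and t: "tr IS (last I) (hd J)"
  shows "isInterval IS (I @ J)"
proof -
  have neI: "I \<noteq> []" and neJ: "J \<noteq> []" using I J by (auto simp: isInterval_def)
  have "tr IS ((I @ J) ! j) ((I @ J) ! Suc j)" if j: "Suc j < length (I @ J)" for j
  proof (cases "Suc j < length I")
    case True then show ?thesis using I by (simp add: isInterval_def nth_append)
  next
    case False
    show ?thesis
    proof (cases "j < length I")
      case True
      then have "j = length I - 1" using False by simp
      then show ?thesis using t neI neJ False by (simp add: nth_append last_conv_nth hd_conv_nth)
    next
      case False
      then have "Suc (j - length I) < length J" using j by simp
      then have "tr IS (J ! (j - length I)) (J ! Suc (j - length I))" using J unfolding isInterval_def by blast
      then show ?thesis using False by (simp add: nth_append Suc_diff_le)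
    qed
  qed
  then show ?thesis using I J unfolding isInterval_def by auto
qed

lemma valid_interval_exists:
  assumes v: "validG IS gs"
  shows "\<exists>I. isInterval IS I \<and> gseq I = gs"
proof -
  have ne: "gs \<noteq> []" and r: "(tG IS)\<^sup>*\<^sup>* (init IS) (hd gs)" and c: "chainG IS gs"
    using v by (auto simp: validG_def)
  obtain s where s: "isState IS s" "last s = hd gs" using run_exists[OF r] by blast
  have gs: "gs = hd gs # tl gs" using ne by simp
  have "chainG IS (last s # tl gs)" using c s(2) gs by metis
  from mkI_props[OF s(1) this] s(2) gs show ?thesis by metis
qed

lemma next_interval:
  assumes s: "isState IS s" and ne: "xs \<noteq> []" and c: "chainG IS (last s # xs)"
  shows "isInterval IS (tl (mkI s xs)) \<and> gseq (tl (mkI s xs)) = xs \<and> tr IS s (hd (tl (mkI s xs)))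
     \<and> length (tl (mkI s xs)) = length xs"
proof -
  note m = mkI_props[OF s c]
  have l: "Suc 0 < length (mkI s xs)" using m(4) ne by simp
  have "isInterval IS (tl (mkI s xs))" by (rule interval_tl[OF m(1) l])
  moreover have "gseq (tl (mkI s xs)) = xs" using m(2) by (simp add: gseq_def map_tl)
  moreover have "tr IS s (hd (tl (mkI s xs)))"
  proof -
    have "tr IS (mkI s xs ! 0) (mkI s xs ! Suc 0)" using m(1) l unfolding isInterval_def by blast
    moreover have "mkI s xs ! 0 = s"
    proof -
      have ne: "mkI s xs \<noteq> []" using l by auto
      show ?thesis using hd_conv_nth[OF ne] m(3) by simp
    qed
    moreover have "hd (tl (mkI s xs)) = mkI s xs ! Suc 0" using l by (cases "mkI s xs") (auto simp: hd_conv_nth)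
    ultimately show ?thesis by simp
  qed
  moreover have "length (tl (mkI s xs)) = length xs" using m(4) by simp
  ultimately show ?thesis by blast
qed

lemma simI_simG: "simI IS i I I' \<longleftrightarrow> isInterval IS I \<and> isInterval IS I' \<and> simG IS i (gseq I) (gseq I')"
proof
  assume h: "simI IS i I I'"
  then have "isInterval IS I" "isInterval IS I'" by (auto simp: simI_def)
  then have "validG IS (gseq I)" "validG IS (gseq I')" by (auto intro: interval_validG)
  then show "isInterval IS I \<and> isInterval IS I' \<and> simG IS i (gseq I) (gseq I')"
    using h by (auto simp: simI_def simG_def simS_def gseq_def)
next
  assume h: "isInterval IS I \<and> isInterval IS I' \<and> simG IS i (gseq I) (gseq I')"
  then have "\<forall>j<length I. isState IS (I ! j) \<and> isState IS (I' ! j)"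
    by (auto simp: isInterval_def simG_def gseq_def)
  then show "simI IS i I I'" using h by (auto simp: simI_def simG_def simS_def gseq_def)
qed

lemma trancl_simC1:
  assumes "(\<lambda>I I'. \<exists>i\<in>G. simI IS i I I')\<^sup>+\<^sup>+ I I'"
  shows "(\<lambda>x y. \<exists>i\<in>G. simG IS i x y)\<^sup>+\<^sup>+ (gseq I) (gseq I') \<and> isInterval IS I'"
  using assms
proof (induction rule: tranclp_induct)
  case (base y) then show ?case by (auto simp: simI_simG)
next
  case (step y z)
  then have r: "(\<lambda>x y. \<exists>i\<in>G. simG IS i x y) (gseq y) (gseq z)" and iz: "isInterval IS z" by (auto simp: simI_simG)
  have "(\<lambda>x y. \<exists>i\<in>G. simG IS i x y)\<^sup>+\<^sup>+ (gseq I) (gseq z)"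
    using step.IH r by (rule tranclp.trancl_into_trancl[OF conjunct1])
  then show ?case using iz by blast
qed

lemma trancl_simC2:
  assumes "(\<lambda>x y. \<exists>i\<in>G. simG IS i x y)\<^sup>+\<^sup>+ gs gs'" "isInterval IS I" "gseq I = gs"
  shows "\<exists>I'. (\<lambda>I I'. \<exists>i\<in>G. simI IS i I I')\<^sup>+\<^sup>+ I I' \<and> gseq I' = gs' \<and> isInterval IS I'"
  using assms(1)
proof (induction rule: tranclp_induct)
  case (base y)
  then obtain i where i: "i \<in> G" "simG IS i gs y" by blast
  then obtain I' where I': "isInterval IS I'" "gseq I' = y" using valid_interval_exists by (meson simG_def)
  then have "simI IS i I I'" using i assms by (simp add: simI_simG)
  then show ?case using I' i by blast
next
  case (step y z)
  then obtain I1 where I1: "(\<lambda>I I'. \<exists>i\<in>G. simI IS i I I')\<^sup>+\<^sup>+ I I1" "gseq I1 = y" "isInterval IS I1" by blast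
  obtain i where i: "i \<in> G" "simG IS i y z" using step by blast
  then obtain I' where I': "isInterval IS I'" "gseq I' = z" using valid_interval_exists by (meson simG_def)
  then have "simI IS i I1 I'" using i I1 by (simp add: simI_simG)
  then have r: "(\<lambda>I I'. \<exists>i\<in>G. simI IS i I I') I1 I'" using i by blast
  have "(\<lambda>I I'. \<exists>i\<in>G. simI IS i I I')\<^sup>+\<^sup>+ I I'" using I1(1) r by (rule tranclp.trancl_into_trancl)
  then show ?case using I' by blast
qed

lemma interval_last_state: "isInterval IS I \<Longrightarrow> isState IS (last I)"
  by (simp add: isInterval_def)

lemma last_gseq: "I \<noteq> [] \<Longrightarrow> last (gseq I) = last (last I)"
  by (simp add: gseq_def last_map)

lemma hd_gseq: "I \<noteq> [] \<Longrightarrow> hd (gseq I) = last (hd I)"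
  by (simp add: gseq_def hd_map)

lemma satB_semG: "isInterval IS I \<Longrightarrow> satB IS I \<phi> = semG IS \<phi> (gseq I)"
proof (induction \<phi> arbitrary: I)
  case Pi then show ?case by simp
next
  case (Prop p) then show ?case by simp
next
  case (Neg a) then show ?case by simp
next
  case (And a b) then show ?case by simp
next
  case (K i a)
  show ?case
  proof
    assume h: "satB IS I (K i a)"
    show "semG IS (K i a) (gseq I)"
    proof (simp only: semG.simps, intro allI impI)
      fix gs' assume g: "simG IS i (gseq I) gs'"
      then obtain I' where I': "isInterval IS I'" "gseq I' = gs'" using valid_interval_exists by (meson simG_def)
      then have "simI IS i I I'" using g K.prems by (simp add: simI_simG)
      then have "satB IS I' a" using h by simp
      then show "semG IS a gs'" using K.IH I' by simp
    qed
  next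
    assume h: "semG IS (K i a) (gseq I)"
    show "satB IS I (K i a)"
    proof (simp only: satB.simps, intro allI impI)
      fix I' assume "simI IS i I I'"
      then have "isInterval IS I'" "simG IS i (gseq I) (gseq I')" by (auto simp: simI_simG)
      then show "satB IS I' a" using h K.IH by simp
    qed
  qed
next
  case (C G a)
  show ?case
  proof
    assume h: "satB IS I (C G a)"
    show "semG IS (C G a) (gseq I)"
    proof (simp only: semG.simps, intro allI impI)
      fix gs' assume g: "(\<lambda>x y. \<exists>i\<in>set G. simG IS i x y)\<^sup>+\<^sup>+ (gseq I) gs'"
      obtain I' where I': "(\<lambda>I I'. \<exists>i\<in>set G. simI IS i I I')\<^sup>+\<^sup>+ I I'" "gseq I' = gs'" "isInterval IS I'"
        using trancl_simC2[OF g C.prems] by blast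
      then have "satB IS I' a" using h by (simp add: simC_def)
      then show "semG IS a gs'" using C.IH I' by simp
    qed
  next
    assume h: "semG IS (C G a) (gseq I)"
    show "satB IS I (C G a)"
    proof (simp only: satB.simps, intro allI impI)
      fix I' assume "simC IS (set G) I I'"
      then have "(\<lambda>x y. \<exists>i\<in>set G. simG IS i x y)\<^sup>+\<^sup>+ (gseq I) (gseq I') \<and> isInterval IS I'"
        unfolding simC_def by (rule trancl_simC1)
      then show "satB IS I' a" using h C.IH by simp
    qed
  qed
next
  case (DiaA a)
  have neI: "I \<noteq> []" using DiaA.prems by (simp add: isInterval_def)
  show ?case
  proof
    assume "satB IS I (DiaA a)"
    then obtain I' where I': "isInterval IS I'" "length I' \<le> length I + fIS IS a" "hd I' = last I" "satB IS I' a"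
      by auto
    have "hd (gseq I') = last (gseq I)" using I' neI by (simp add: hd_gseq last_gseq isInterval_def)
    then show "semG IS (DiaA a) (gseq I)" using I' DiaA.IH interval_validG by (auto intro!: exI[of _ "gseq I'"])
  next
    assume "semG IS (DiaA a) (gseq I)"
    then obtain gs' where g: "validG IS gs'" "length gs' \<le> length I + fIS IS a" "hd gs' = last (gseq I)" "semG IS a gs'"
      by auto
    let ?s = "last I"
    have s: "isState IS ?s" using DiaA.prems by (rule interval_last_state)
    have ne: "gs' \<noteq> []" and c: "chainG IS gs'" using g by (auto simp: validG_def)
    have "last ?s # tl gs' = gs'" using g(3) ne neI by (metis last_gseq list.collapse)
    then have c': "chainG IS (last ?s # tl gs')" using c by simp
    note m = mkI_props[OF s c']
    have "satB IS (mkI ?s (tl gs')) a" using DiaA.IH[OF m(1)] m(2) g(4) \<open>last ?s # tl gs' = gs'\<close> by simp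
    moreover have "length (mkI ?s (tl gs')) \<le> length I + fIS IS a" using m(4) g(2) ne by simp
    ultimately show "satB IS I (DiaA a)" using m(1,3) by auto
  qed
next
  case (DiaBbar a)
  have neI: "I \<noteq> []" using DiaBbar.prems by (simp add: isInterval_def)
  show ?case
  proof
    assume "satB IS I (DiaBbar a)"
    then obtain I' I1 where I': "isInterval IS I'" "length I' \<le> length I + fIS IS a" "isInterval IS I1" "I' = I @ I1" "satB IS I' a"
      by auto
    have "I1 \<noteq> []" using I' by (simp add: isInterval_def)
    then show "semG IS (DiaBbar a) (gseq I)" using I' DiaBbar.IH interval_validG by (auto intro!: exI[of _ "gseq I'"])
  next
    assume "semG IS (DiaBbar a) (gseq I)"
    then obtain gs' where g: "validG IS gs'" "length gs' \<le> length I + fIS IS a" "length I < length gs'"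
      "take (length I) gs' = gseq I" "semG IS a gs'"
      by auto
    define xs where "xs = drop (length I) gs'"
    have gs': "gs' = gseq I @ xs" using g(4) unfolding xs_def by (metis append_take_drop_id)
    have nxs: "xs \<noteq> []" using g(3) by (simp add: xs_def)
    let ?s = "last I"
    have s: "isState IS ?s" using DiaBbar.prems by (rule interval_last_state)
    have c: "chainG IS gs'" using g by (auto simp: validG_def)
    have "chainG IS (last (gseq I) # xs)" using chainG_junction[of IS "gseq I" xs] c gs' neI by (simp add: gseq_def)
    then have c': "chainG IS (last ?s # xs)" using neI by (simp add: last_gseq)
    note n = next_interval[OF s nxs c']
    let ?I1 = "tl (mkI ?s xs)"
    have "isInterval IS (I @ ?I1)" using interval_append[OF DiaBbar.prems] n by blast
    moreover have "gseq (I @ ?I1) = gs'" using n gs' by simp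
    moreover have "length (I @ ?I1) \<le> length I + fIS IS a" using n g(2) gs' by simp
    ultimately show "satB IS I (DiaBbar a)" using DiaBbar.IH[of "I @ ?I1"] g(5) n by auto
  qed
next
  case (DiaN a)
  have neI: "I \<noteq> []" using DiaN.prems by (simp add: isInterval_def)
  show ?case
  proof
    assume "satB IS I (DiaN a)"
    then obtain I' where I': "isInterval IS I'" "length I' \<le> length I + fIS IS a" "tr IS (last I) (hd I')" "satB IS I' a"
      by auto
    have "I' \<noteq> []" using I' by (simp add: isInterval_def)
    then have "tG IS (last (gseq I)) (hd (gseq I'))" using tr_tG[OF I'(3)] neI by (simp add: hd_gseq last_gseq)
    then show "semG IS (DiaN a) (gseq I)" using I' DiaN.IH interval_validG by (auto intro!: exI[of _ "gseq I'"])
  next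
    assume "semG IS (DiaN a) (gseq I)"
    then obtain gs' where g: "validG IS gs'" "length gs' \<le> length I + fIS IS a" "tG IS (last (gseq I)) (hd gs')" "semG IS a gs'"
      by auto
    let ?s = "last I"
    have s: "isState IS ?s" using DiaN.prems by (rule interval_last_state)
    have ne: "gs' \<noteq> []" and c: "chainG IS gs'" using g by (auto simp: validG_def)
    have c': "chainG IS (last ?s # gs')" using g(3) c neI by (simp add: chainG_Cons last_gseq)
    note n = next_interval[OF s ne c']
    show "satB IS I (DiaN a)" using DiaN.IH[of "tl (mkI ?s gs')"] n g by auto
  qed
qed



definition cg :: "nat list list \<Rightarrow> nat" where "cg gs = le (map le gs)"

fun need :: "isrl \<Rightarrow> form \<Rightarrow> nat" where
  "need IS Pi = 0"
| "need IS (Prop p) = 0"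
| "need IS (Neg a) = need IS a"
| "need IS (And a b) = max (need IS a) (need IS b)"
| "need IS (K i a) = need IS a"
| "need IS (C G a) = need IS a"
| "need IS (DiaA a) = fIS IS a + need IS a"
| "need IS (DiaBbar a) = fIS IS a + need IS a"
| "need IS (DiaN a) = fIS IS a + need IS a"

fun semT :: "isrl \<Rightarrow> nat \<Rightarrow> form \<Rightarrow> nat list list \<Rightarrow> bool" where
  "semT IS B Pi gs = (length gs = 1)"
| "semT IS B (Prop p) gs = (gs \<in> lang (lam IS ! p))"
| "semT IS B (Neg a) gs = (\<not> semT IS B a gs)"
| "semT IS B (And a b) gs = (semT IS B a gs \<and> semT IS B b gs)"
| "semT IS B (K i a) gs = (\<forall>gs'. cg gs' \<le> B \<longrightarrow> simG IS i gs gs' \<longrightarrow> semT IS B a gs')"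
| "semT IS B (C G a) gs = (\<forall>gs'. cg gs' \<le> B \<longrightarrow>
      (\<lambda>x y. cg x \<le> B \<and> cg y \<le> B \<and> (\<exists>i\<in>set G. simG IS i x y))\<^sup>+\<^sup>+ gs gs' \<longrightarrow> semT IS B a gs')"
| "semT IS B (DiaA a) gs = (gs \<noteq> [] \<and> (\<exists>gs'. cg gs' \<le> B \<and> validG IS gs' \<and> length gs' \<le> length gs + fIS IS a \<and>
      hd gs' = last gs \<and> semT IS B a gs'))"
| "semT IS B (DiaBbar a) gs = (gs \<noteq> [] \<and> (\<exists>gs'. cg gs' \<le> B \<and> validG IS gs' \<and> length gs' \<le> length gs + fIS IS a \<and>
      length gs < length gs' \<and> take (length gs) gs' = gs \<and> semT IS B a gs'))"
| "semT IS B (DiaN a) gs = (gs \<noteq> [] \<and> (\<exists>gs'. cg gs' \<le> B \<and> validG IS gs' \<and> length gs' \<le> length gs + fIS IS a \<and>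
      tG IS (last gs) (hd gs') \<and> semT IS B a gs'))"

lemma semT_semG:
  "validG IS gs \<Longrightarrow> (\<forall>gs'. validG IS gs' \<and> length gs' \<le> length gs + need IS \<phi> \<longrightarrow> cg gs' \<le> B) \<Longrightarrow>
   semT IS B \<phi> gs = semG IS \<phi> gs"
proof (induction \<phi> arbitrary: gs)
  case (And a b)
  have "semT IS B a gs = semG IS a gs" using And.prems by (intro And.IH(1)) auto
  moreover have "semT IS B b gs = semG IS b gs" using And.prems by (intro And.IH(2)) auto
  ultimately show ?case by simp
next
  case (K i a)
  have "semT IS B a gs' = semG IS a gs'" if "simG IS i gs gs'" for gs'
    using that K.prems by (intro K.IH) (auto simp: simG_def)
  moreover have "cg gs' \<le> B" if "simG IS i gs gs'" for gs'
    using that K.prems by (auto simp: simG_def)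
  ultimately show ?case by auto
next
  case (C G a)
  let ?Rg = "\<lambda>x y. \<exists>i\<in>set G. simG IS i x y"
  let ?Rb = "\<lambda>x y. cg x \<le> B \<and> cg y \<le> B \<and> (\<exists>i\<in>set G. simG IS i x y)"
  have reach: "?Rb\<^sup>+\<^sup>+ gs y \<and> validG IS y \<and> length y = length gs" if "?Rg\<^sup>+\<^sup>+ gs y" for y
    using that
  proof (induction rule: tranclp_induct)
    case (base y)
    then show ?case using C.prems by (auto simp: simG_def intro!: tranclp.r_into_trancl)
  next
    case (step y z)
    then obtain i where i: "i \<in> set G" "simG IS i y z" by blast
    have vz: "validG IS z" "length z = length gs" using i step.IH by (auto simp: simG_def)
    have "cg y \<le> B" "cg z \<le> B" using step.IH vz C.prems by auto
    then have r: "?Rb y z" "validG IS z" "length z = length gs" using i vz by auto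
    have "?Rb\<^sup>+\<^sup>+ gs z" using step.IH r(1) by (rule tranclp.trancl_into_trancl[OF conjunct1])
    then show ?case using r by blast
  qed
  have mono: "?Rg\<^sup>+\<^sup>+ gs y" if "?Rb\<^sup>+\<^sup>+ gs y" for y
    using that by (induction rule: tranclp_induct) (auto intro: tranclp.trancl_into_trancl)
  show ?case
  proof -
    have "semT IS B a y = semG IS a y" if "?Rg\<^sup>+\<^sup>+ gs y" for y
      using reach[OF that] C.prems by (intro C.IH) auto
    note eq = this
    have bnd: "cg y \<le> B" if "?Rg\<^sup>+\<^sup>+ gs y" for y using reach[OF that] C.prems by auto
    show ?thesis
    proof
      assume h: "semT IS B (C G a) gs"
      show "semG IS (C G a) gs"
      proof (simp only: semG.simps, intro allI impI)
        fix y assume y: "?Rg\<^sup>+\<^sup>+ gs y"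
        then have "semT IS B a y" using h reach[OF y] bnd[OF y] by simp
        then show "semG IS a y" using eq[OF y] by simp
      qed
    next
      assume h: "semG IS (C G a) gs"
      show "semT IS B (C G a) gs"
      proof (simp only: semT.simps, intro allI impI)
        fix y assume "cg y \<le> B" and y: "?Rb\<^sup>+\<^sup>+ gs y"
        have y': "?Rg\<^sup>+\<^sup>+ gs y" using y by (rule mono)
        then show "semT IS B a y" using h eq[OF y'] by simp
      qed
    qed
  qed
next
  case (DiaA a)
  have ne: "gs \<noteq> []" using DiaA.prems by (simp add: validG_def)
  have eq: "semT IS B a gs' = semG IS a gs'" if "validG IS gs'" "length gs' \<le> length gs + fIS IS a" for gs'
    using that DiaA.prems by (intro DiaA.IH) auto
  have bnd: "cg gs' \<le> B" if "validG IS gs'" "length gs' \<le> length gs + fIS IS a" for gs'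
    using that DiaA.prems by auto
  show ?case using eq bnd ne by (simp only: semT.simps semG.simps) blast
next
  case (DiaBbar a)
  have ne: "gs \<noteq> []" using DiaBbar.prems by (simp add: validG_def)
  have eq: "semT IS B a gs' = semG IS a gs'" if "validG IS gs'" "length gs' \<le> length gs + fIS IS a" for gs'
    using that DiaBbar.prems by (intro DiaBbar.IH) auto
  have bnd: "cg gs' \<le> B" if "validG IS gs'" "length gs' \<le> length gs + fIS IS a" for gs'
    using that DiaBbar.prems by auto
  show ?case using eq bnd ne by (simp only: semT.simps semG.simps) blast
next
  case (DiaN a)
  have ne: "gs \<noteq> []" using DiaN.prems by (simp add: validG_def)
  have eq: "semT IS B a gs' = semG IS a gs'" if "validG IS gs'" "length gs' \<le> length gs + fIS IS a" for gs'
    using that DiaN.prems by (intro DiaN.IH) auto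
  have bnd: "cg gs' \<le> B" if "validG IS gs'" "length gs' \<le> length gs + fIS IS a" for gs'
    using that DiaN.prems by auto
  show ?case using eq bnd ne by (simp only: semT.simps semG.simps) blast
qed auto



lemma pr_eq_iff[simp]: "pr a b = pr c d \<longleftrightarrow> a = c \<and> b = d" by (simp add: pr_def)

lemma enc_isrl_le: "enc_isrl IS = le [nag IS, le (locs IS), le (init IS), le (acts IS),
      le (map (\<lambda>pi. le (map le pi)) (prot IS)), le (map (\<lambda>ti. le (map enc_trip ti)) (trans IS)),
      le (map enc_rexp (lam IS))]"
proof -
  have e: "enc_list f = (\<lambda>xs. le (map f xs))" for f :: "'a \<Rightarrow> nat" by (rule ext) (simp add: enc_list_def)
  show ?thesis by (simp only: enc_isrl_def e)
qed

lemma enc_trip_pr: "enc_trip (l, a, l') = pr l (pr (le a) l')" by (simp add: enc_trip_def pr_def)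

lemma enc_trip_inj: "enc_trip x = enc_trip y \<longleftrightarrow> x = y"
  by (cases x; cases y) (auto simp: enc_trip_pr list_encode_eq)

definition nagc where "nagc isc = cnth isc 0"
definition locsc where "locsc isc = cnth isc 1"
definition initc where "initc isc = cnth isc 2"
definition actsc where "actsc isc = cnth isc 3"
definition protc where "protc isc = cnth isc 4"
definition transc where "transc isc = cnth isc 5"
definition lamc where "lamc isc = cnth isc 6"

lemma isc_simps[simp]:
  "nagc (enc_isrl IS) = nag IS" "locsc (enc_isrl IS) = le (locs IS)" "initc (enc_isrl IS) = le (init IS)"
  "actsc (enc_isrl IS) = le (acts IS)" "protc (enc_isrl IS) = le (map (\<lambda>pi. le (map le pi)) (prot IS))"
  "transc (enc_isrl IS) = le (map (\<lambda>ti. le (map enc_trip ti)) (trans IS))"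
  "lamc (enc_isrl IS) = le (map enc_rexp (lam IS))"
  by (simp_all add: enc_isrl_le nagc_def locsc_def initc_def actsc_def protc_def transc_def lamc_def
      cnth_le del: list_encode.simps)

definition sumc :: "nat \<Rightarrow> nat" where "sumc c = (\<Sum>k<clen c. cnth c k)"

lemma sumc_le[simp]: "sumc (le xs) = sum_list xs"
  by (simp add: sumc_def sum_list_sum_nth atLeast0LessThan)

definition gsc :: "nat \<Rightarrow> nat \<Rightarrow> bool" where
  "gsc isc u \<longleftrightarrow> clen u = Suc (nagc isc) \<and> (\<forall>i<Suc (nagc isc). cnth u i < cnth (locsc isc) i)"

definition jc :: "nat \<Rightarrow> nat \<Rightarrow> bool" where
  "jc isc a \<longleftrightarrow> clen a = Suc (nagc isc) \<and> (\<forall>i<Suc (nagc isc). cnth a i < cnth (actsc isc) i)"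

definition Abc :: "nat \<Rightarrow> nat" where "Abc isc = ctab (\<lambda>j. sumc (actsc isc)) (Suc (nagc isc))"
definition Gbc :: "nat \<Rightarrow> nat" where "Gbc isc = ctab (\<lambda>j. sumc (locsc isc)) (Suc (nagc isc))"

definition tGc :: "nat \<Rightarrow> nat \<Rightarrow> nat \<Rightarrow> bool" where
  "tGc isc u v \<longleftrightarrow> gsc isc u \<and> gsc isc v \<and> (\<exists>a\<le>Abc isc. jc isc a \<and>
     (\<forall>i<Suc (nagc isc).
        (\<exists>k<clen (cnth (cnth (protc isc) i) (cnth u i)). cnth (cnth (cnth (protc isc) i) (cnth u i)) k = cnth a i) \<and>
        (\<exists>k<clen (cnth (transc isc) i). cnth (cnth (transc isc) i) k = pr (cnth u i) (pr a (cnth v i)))))"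

definition reachc :: "nat \<Rightarrow> nat \<Rightarrow> bool" where
  "reachc isc g \<longleftrightarrow> g = initc isc \<or> (\<exists>p\<le>PB (Gbc isc). pathc (tGc isc) p (initc isc) g)"

definition validc :: "nat \<Rightarrow> nat \<Rightarrow> bool" where
  "validc isc c \<longleftrightarrow> c \<noteq> 0 \<and> reachc isc (cnth c 0) \<and> (\<forall>j<clen c - 1. tGc isc (cnth c j) (cnth c (Suc j)))"

definition simc :: "nat \<Rightarrow> nat \<Rightarrow> nat \<Rightarrow> nat \<Rightarrow> bool" where
  "simc isc i c c' \<longleftrightarrow> validc isc c \<and> validc isc c' \<and> clen c = clen c' \<and>
     (\<forall>j<clen c. cnth (cnth c j) i = cnth (cnth c' j) i)"

lemma ex_cnth: "(\<exists>k<clen (le xs). cnth (le xs) k = v) = (v \<in> set xs)"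
  by (auto simp: in_set_conv_nth)

lemma wfD:
  assumes "wf_isrl IS"
  shows "length (locs IS) = Suc (nag IS)" "length (init IS) = Suc (nag IS)"
     "length (acts IS) = Suc (nag IS)" "length (prot IS) = Suc (nag IS)"
     "length (trans IS) = Suc (nag IS)"
     "\<And>i. i \<le> nag IS \<Longrightarrow> init IS ! i < locs IS ! i"
     "\<And>i. i \<le> nag IS \<Longrightarrow> length (prot IS ! i) = locs IS ! i"
  using assms by (auto simp: wf_isrl_def)

lemma init_gstates: "wf_isrl IS \<Longrightarrow> init IS \<in> gstates IS"
  by (auto simp: gstates_def dest: wfD)

lemma gsc_correct: "wf_isrl IS \<Longrightarrow> gsc (enc_isrl IS) (le g) \<longleftrightarrow> g \<in> gstates IS"
  by (auto simp: gsc_def gstates_def wfD less_Suc_eq_le)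

lemma jc_correct: "wf_isrl IS \<Longrightarrow> jc (enc_isrl IS) (le a) \<longleftrightarrow> a \<in> jactions IS"
  by (auto simp: jc_def jactions_def wfD less_Suc_eq_le)

lemma gstates_bound: "wf_isrl IS \<Longrightarrow> g \<in> gstates IS \<Longrightarrow> le g \<le> Gbc (enc_isrl IS)"
proof -
  assume wf: "wf_isrl IS" and g: "g \<in> gstates IS"
  have "\<forall>x\<in>set g. x \<le> sum_list (locs IS)"
  proof
    fix x assume "x \<in> set g"
    then obtain i where i: "i < length g" "x = g ! i" by (auto simp: in_set_conv_nth)
    then have "x < locs IS ! i" "i < length (locs IS)" using g wf by (auto simp: gstates_def wfD less_Suc_eq_le)
    then show "x \<le> sum_list (locs IS)" using elem_le_sum_list by fastforce
  qed
  then show ?thesis using le_replicate_bound[of g "Suc (nag IS)"] g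
    by (simp add: Gbc_def gstates_def map_replicate_const)
qed

lemma jactions_bound: "wf_isrl IS \<Longrightarrow> a \<in> jactions IS \<Longrightarrow> le a \<le> Abc (enc_isrl IS)"
proof -
  assume wf: "wf_isrl IS" and g: "a \<in> jactions IS"
  have "\<forall>x\<in>set a. x \<le> sum_list (acts IS)"
  proof
    fix x assume "x \<in> set a"
    then obtain i where i: "i < length a" "x = a ! i" by (auto simp: in_set_conv_nth)
    then have "x < acts IS ! i" "i < length (acts IS)" using g wf by (auto simp: jactions_def wfD less_Suc_eq_le)
    then show "x \<le> sum_list (acts IS)" using elem_le_sum_list by fastforce
  qed
  then show ?thesis using le_replicate_bound[of a "Suc (nag IS)"] g
    by (simp add: Abc_def jactions_def map_replicate_const)
qed

lemma tGc_correct: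
  assumes wf: "wf_isrl IS"
  shows "tGc (enc_isrl IS) (le g) (le g') \<longleftrightarrow> tG IS g g'"
proof -
  let ?isc = "enc_isrl IS"
  have key: "((\<exists>k<clen (cnth (cnth (protc ?isc) i) (cnth (le g) i)). cnth (cnth (cnth (protc ?isc) i) (cnth (le g) i)) k = cnth (le a) i) \<and>
        (\<exists>k<clen (cnth (transc ?isc) i). cnth (cnth (transc ?isc) i) k = pr (cnth (le g) i) (pr (le a) (cnth (le g') i))))
      \<longleftrightarrow> (a ! i \<in> set (prot IS ! i ! (g ! i)) \<and> (g ! i, a, g' ! i) \<in> set (trans IS ! i))"
    if "g \<in> gstates IS" "g' \<in> gstates IS" "a \<in> jactions IS" "i < Suc (nag IS)" for a i
  proof -
    have li: "i < length g" "i < length g'" "i < length a" "i < length (prot IS)" "i < length (trans IS)"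
      using that wf by (auto simp: gstates_def jactions_def wfD)
    have gi: "g ! i < length (prot IS ! i)" using that wf by (auto simp: gstates_def wfD less_Suc_eq_le)
    have "cnth (cnth (protc ?isc) i) (cnth (le g) i) = le (prot IS ! i ! (g ! i))"
      using li gi by simp
    moreover have "cnth (transc ?isc) i = le (map enc_trip (trans IS ! i))" using li by simp
    moreover have "pr (g ! i) (pr (le a) (g' ! i)) = enc_trip (g ! i, a, g' ! i)" by (simp add: enc_trip_pr)
    moreover have "(enc_trip (g ! i, a, g' ! i) \<in> set (map enc_trip (trans IS ! i))) = ((g ! i, a, g' ! i) \<in> set (trans IS ! i))"
      by (auto simp: enc_trip_inj)
    ultimately show ?thesis using li by (simp only: ex_cnth cnth_le)
  qed
  show ?thesis
  proof
    assume h: "tGc ?isc (le g) (le g')"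
    then have gs: "g \<in> gstates IS" "g' \<in> gstates IS" using wf by (auto simp: tGc_def gsc_correct)
    obtain ac where ac: "ac \<le> Abc ?isc" "jc ?isc ac" and rest: "\<forall>i<Suc (nag IS).
        (\<exists>k<clen (cnth (cnth (protc ?isc) i) (cnth (le g) i)). cnth (cnth (cnth (protc ?isc) i) (cnth (le g) i)) k = cnth ac i) \<and>
        (\<exists>k<clen (cnth (transc ?isc) i). cnth (cnth (transc ?isc) i) k = pr (cnth (le g) i) (pr ac (cnth (le g') i)))"
      using h by (auto simp: tGc_def)
    define a where "a = ld ac"
    have aj: "a \<in> jactions IS" using ac(2) wf jc_correct[OF wf, of a] by (simp add: a_def)
    have "ac = le a" by (simp add: a_def)
    then have "\<forall>i\<le>nag IS. a ! i \<in> set (prot IS ! i ! (g ! i)) \<and> (g ! i, a, g' ! i) \<in> set (trans IS ! i)"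
      using rest key[OF gs aj] by (simp add: less_Suc_eq_le)
    then show "tG IS g g'" using gs aj by (auto simp: tG_def)
  next
    assume h: "tG IS g g'"
    then have gs: "g \<in> gstates IS" "g' \<in> gstates IS" by (auto simp: tG_def)
    obtain a where a: "a \<in> jactions IS" "\<forall>i\<le>nag IS. a ! i \<in> set (prot IS ! i ! (g ! i)) \<and> (g ! i, a, g' ! i) \<in> set (trans IS ! i)"
      using h by (auto simp: tG_def)
    have "le a \<le> Abc ?isc" "jc ?isc (le a)" using a wf by (simp_all add: jactions_bound jc_correct)
    moreover have "\<forall>i<Suc (nag IS).
        (\<exists>k<clen (cnth (cnth (protc ?isc) i) (cnth (le g) i)). cnth (cnth (cnth (protc ?isc) i) (cnth (le g) i)) k = cnth (le a) i) \<and>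
        (\<exists>k<clen (cnth (transc ?isc) i). cnth (cnth (transc ?isc) i) k = pr (cnth (le g) i) (pr (le a) (cnth (le g') i)))"
      using key[OF gs a(1)] a(2) by (simp add: less_Suc_eq_le)
    ultimately show "tGc ?isc (le g) (le g')" using gs wf unfolding tGc_def
      by (simp add: gsc_correct) blast
  qed
qed

lemma tGc_correct': "wf_isrl IS \<Longrightarrow> tGc (enc_isrl IS) u v \<longleftrightarrow> tG IS (ld u) (ld v)"
  using tGc_correct[of IS "ld u" "ld v"] by simp

lemma tGc_bound: "wf_isrl IS \<Longrightarrow> tGc (enc_isrl IS) u v \<Longrightarrow> u \<le> Gbc (enc_isrl IS) \<and> v \<le> Gbc (enc_isrl IS)"
proof -
  assume wf: "wf_isrl IS" and t: "tGc (enc_isrl IS) u v"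
  then have "tG IS (ld u) (ld v)" by (simp add: tGc_correct')
  then have "ld u \<in> gstates IS" "ld v \<in> gstates IS" by (auto simp: tG_def)
  then show ?thesis using gstates_bound[OF wf] by (metis list_decode_inverse)
qed

lemma tranclp_bij:
  assumes r: "\<And>u v. r' u v = r (d u) (d v)" and de: "\<And>x. d (e x) = x" and ed: "\<And>u. e (d u) = u"
  shows "r'\<^sup>+\<^sup>+ (e a) (e b) \<longleftrightarrow> r\<^sup>+\<^sup>+ a b"
proof
  assume "r'\<^sup>+\<^sup>+ (e a) (e b)"
  then have "r\<^sup>+\<^sup>+ (d (e a)) (d (e b))"
    by (induction rule: tranclp_induct) (auto simp: r intro: tranclp.trancl_into_trancl)
  then show "r\<^sup>+\<^sup>+ a b" by (simp add: de)
next
  assume "r\<^sup>+\<^sup>+ a b"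
  then show "r'\<^sup>+\<^sup>+ (e a) (e b)"
    by (induction rule: tranclp_induct) (auto simp: r de intro: tranclp.trancl_into_trancl)
qed

lemma rtranclp_eq_tranclp: "r\<^sup>*\<^sup>* a b \<longleftrightarrow> a = b \<or> r\<^sup>+\<^sup>+ a b"
  by (meson rtranclpD tranclp_into_rtranclp rtranclp.rtrancl_refl)

lemma reachc_correct:
  assumes wf: "wf_isrl IS"
  shows "reachc (enc_isrl IS) (le g) \<longleftrightarrow> (tG IS)\<^sup>*\<^sup>* (init IS) g"
proof -
  let ?isc = "enc_isrl IS"
  have "(tGc ?isc)\<^sup>+\<^sup>+ (le (init IS)) (le g) \<longleftrightarrow> (tG IS)\<^sup>+\<^sup>+ (init IS) g"
    by (rule tranclp_bij[of _ "tG IS" ld le]) (simp_all add: tGc_correct'[OF wf])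
  moreover have "(tGc ?isc)\<^sup>+\<^sup>+ (le (init IS)) (le g) \<longleftrightarrow> (\<exists>p\<le>PB (Gbc ?isc). pathc (tGc ?isc) p (le (init IS)) (le g))"
    by (rule tranclp_pathc) (rule tGc_bound[OF wf])
  ultimately show ?thesis by (auto simp: reachc_def rtranclp_eq_tranclp list_encode_eq)
qed

lemma cnth_cg: "j < length gs \<Longrightarrow> cnth (cg gs) j = le (gs ! j)" by (simp add: cg_def)
lemma clen_cg[simp]: "clen (cg gs) = length gs" by (simp add: cg_def)
lemma cg_0[simp]: "cg gs = 0 \<longleftrightarrow> gs = []" by (simp add: cg_def)
lemma cg_inj[simp]: "cg gs = cg gs' \<longleftrightarrow> gs = gs'"
  by (simp add: cg_def list_encode_eq inj_map_eq_map inj_list_encode)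

definition dec :: "nat \<Rightarrow> nat list list" where "dec c = map ld (ld c)"
lemma cg_dec[simp]: "cg (dec c) = c" by (simp add: cg_def dec_def comp_def)
lemma dec_cg[simp]: "dec (cg gs) = gs" by (simp add: cg_def dec_def comp_def)

lemma validc_correct:
  assumes wf: "wf_isrl IS"
  shows "validc (enc_isrl IS) (cg gs) \<longleftrightarrow> validG IS gs"
proof (cases "gs = []")
  case True then show ?thesis by (simp add: validc_def validG_def)
next
  case False
  have "reachc (enc_isrl IS) (cnth (cg gs) 0) \<longleftrightarrow> (tG IS)\<^sup>*\<^sup>* (init IS) (hd gs)"
    using False by (simp add: cnth_cg reachc_correct[OF wf] hd_conv_nth)
  moreover have "(\<forall>j<clen (cg gs) - 1. tGc (enc_isrl IS) (cnth (cg gs) j) (cnth (cg gs) (Suc j))) \<longleftrightarrow> chainG IS gs"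
    by (auto simp: cnth_cg tGc_correct[OF wf] chainG_def)
  ultimately show ?thesis using False by (simp add: validc_def validG_def)
qed

lemma valid_gstates:
  assumes wf: "wf_isrl IS" and v: "validG IS gs" and g: "g \<in> set gs"
  shows "g \<in> gstates IS"
proof -
  obtain j where j: "j < length gs" "g = gs ! j" using g by (auto simp: in_set_conv_nth)
  show ?thesis
  proof (cases j)
    case 0
    have "gs \<noteq> []" using v by (simp add: validG_def)
    then have "g = hd gs" using j 0 by (simp add: hd_conv_nth)
    then have r: "(tG IS)\<^sup>*\<^sup>* (init IS) g" using v by (simp add: validG_def)
    then show ?thesis using init_gstates[OF wf]
      by (cases rule: rtranclp.cases) (auto simp: tG_def)
  next
    case (Suc k)
    then have "tG IS (gs ! k) (gs ! j)" using v j by (simp add: validG_def chainG_def)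
    then show ?thesis using j by (simp add: tG_def)
  qed
qed

lemma simc_correct:
  assumes wf: "wf_isrl IS" and i: "i \<le> nag IS"
  shows "simc (enc_isrl IS) i (cg gs) (cg gs') \<longleftrightarrow> simG IS i gs gs'"
proof -
  have comp: "cnth (le g) i = g ! i" if "g \<in> gstates IS" for g
    using that i by (simp add: gstates_def)
  show ?thesis
  proof
    assume h: "simc (enc_isrl IS) i (cg gs) (cg gs')"
    then have v: "validG IS gs" "validG IS gs'" "length gs = length gs'" by (auto simp: simc_def validc_correct[OF wf])
    have "gs ! j ! i = gs' ! j ! i" if "j < length gs" for j
    proof -
      have "gs ! j \<in> gstates IS" "gs' ! j \<in> gstates IS" using that v valid_gstates[OF wf] by auto
      then show ?thesis using h that v by (auto simp: simc_def cnth_cg comp)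
    qed
    then show "simG IS i gs gs'" using v by (simp add: simG_def)
  next
    assume h: "simG IS i gs gs'"
    then have v: "validG IS gs" "validG IS gs'" "length gs = length gs'" by (auto simp: simG_def)
    have "cnth (cnth (cg gs) j) i = cnth (cnth (cg gs') j) i" if "j < length gs" for j
    proof -
      have "gs ! j \<in> gstates IS" "gs' ! j \<in> gstates IS" using that v valid_gstates[OF wf] by auto
      then show ?thesis using h that v by (auto simp: simG_def cnth_cg comp)
    qed
    then show "simc (enc_isrl IS) i (cg gs) (cg gs')" using v by (simp add: simc_def validc_correct[OF wf])
  qed
qed



lemma cp2_lift: "cp (\<lambda>p. H (pfst p) (psnd p)) \<Longrightarrow> cp f \<Longrightarrow> cp g \<Longrightarrow> cp (\<lambda>x. H (f x) (g x))"
  using cp_comp[of "\<lambda>p. H (pfst p) (psnd p)" "\<lambda>x. pr (f x) (g x)"] by (simp add: cp_pr)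
lemma cp3_lift: "cp (\<lambda>p. H (pfst p) (pfst (psnd p)) (psnd (psnd p))) \<Longrightarrow> cp f \<Longrightarrow> cp g \<Longrightarrow> cp h \<Longrightarrow> cp (\<lambda>x. H (f x) (g x) (h x))"
  using cp_comp[of "\<lambda>p. H (pfst p) (pfst (psnd p)) (psnd (psnd p))" "\<lambda>x. pr (f x) (pr (g x) (h x))"] by (simp add: cp_pr)
lemma cpb1_lift: "cpb (\<lambda>p. H p) \<Longrightarrow> cp f \<Longrightarrow> cpb (\<lambda>x. H (f x))"
  by (rule cpb_comp)
lemma cpb2_lift: "cpb (\<lambda>p. H (pfst p) (psnd p)) \<Longrightarrow> cp f \<Longrightarrow> cp g \<Longrightarrow> cpb (\<lambda>x. H (f x) (g x))"
  using cpb_comp[of "\<lambda>p. H (pfst p) (psnd p)" "\<lambda>x. pr (f x) (g x)"] by (simp add: cp_pr)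
lemma cpb3_lift: "cpb (\<lambda>p. H (pfst p) (pfst (psnd p)) (psnd (psnd p))) \<Longrightarrow> cp f \<Longrightarrow> cp g \<Longrightarrow> cp h \<Longrightarrow> cpb (\<lambda>x. H (f x) (g x) (h x))"
  using cpb_comp[of "\<lambda>p. H (pfst p) (pfst (psnd p)) (psnd (psnd p))" "\<lambda>x. pr (f x) (pr (g x) (h x))"] by (simp add: cp_pr)
lemma cpb4_lift: "cpb (\<lambda>p. H (pfst p) (pfst (psnd p)) (pfst (psnd (psnd p))) (psnd (psnd (psnd p)))) \<Longrightarrow> cp f \<Longrightarrow> cp g \<Longrightarrow> cp h \<Longrightarrow> cp k \<Longrightarrow> cpb (\<lambda>x. H (f x) (g x) (h x) (k x))"
  using cpb_comp[of "\<lambda>p. H (pfst p) (pfst (psnd p)) (pfst (psnd (psnd p))) (psnd (psnd (psnd p)))" "\<lambda>x. pr (f x) (pr (g x) (pr (h x) (k x)))"] by (simp add: cp_pr)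

lemmas isc_defs = nagc_def locsc_def initc_def actsc_def protc_def transc_def lamc_def

lemma cp_sumc: "cp f \<Longrightarrow> cp (\<lambda>x. sumc (f x))"
  by (rule cp_comp[of sumc]) (unfold sumc_def, intro cpI2 cp_comp[OF cp_cnth] cp_pfst cp_psnd cp_id)

lemmas cpI3 = cpI2 cp_sumc cp_ctab

lemma cpb_tGc: "cp f \<Longrightarrow> cp g \<Longrightarrow> cp h \<Longrightarrow> cpb (\<lambda>x. tGc (f x) (g x) (h x))"
proof (rule cpb3_lift[of tGc])
  show "cpb (\<lambda>p. tGc (pfst p) (pfst (psnd p)) (psnd (psnd p)))"
    unfolding tGc_def gsc_def jc_def Abc_def isc_defs by (intro cpI3)
qed

lemma cp_Gbc: "cp f \<Longrightarrow> cp (\<lambda>x. Gbc (f x))"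
proof (rule cp_comp[of Gbc])
  show "cp Gbc" unfolding Gbc_def locsc_def nagc_def by (intro cpI3)
qed

lemma cp_PB': "cp f \<Longrightarrow> cp (\<lambda>x. PB (f x))" by (rule cp_PB)

lemma cpb_reachc: "cp f \<Longrightarrow> cp g \<Longrightarrow> cpb (\<lambda>x. reachc (f x) (g x))"
proof (rule cpb2_lift[of reachc])
  show "cpb (\<lambda>p. reachc (pfst p) (psnd p))"
    unfolding reachc_def pathc_def initc_def by (intro cpI3 cpb_tGc cp_PB cp_Gbc)
qed

lemma cpb_validc: "cp f \<Longrightarrow> cp g \<Longrightarrow> cpb (\<lambda>x. validc (f x) (g x))"
proof (rule cpb2_lift[of validc])
  show "cpb (\<lambda>p. validc (pfst p) (psnd p))"
    unfolding validc_def by (intro cpI3 cpb_tGc cpb_reachc)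
qed

lemma cpb_simc: "cp f \<Longrightarrow> cp g \<Longrightarrow> cp h \<Longrightarrow> cp k \<Longrightarrow> cpb (\<lambda>x. simc (f x) (g x) (h x) (k x))"
proof (rule cpb4_lift[of simc])
  show "cpb (\<lambda>p. simc (pfst p) (pfst (psnd p)) (pfst (psnd (psnd p))) (psnd (psnd (psnd p))))"
    unfolding simc_def by (intro cpI3 cpb_validc)
qed

lemmas cpI4 = cpI3 cpb_tGc cp_PB cp_Gbc cpb_reachc cpb_validc cpb_simc



lemma pr_gt: "0 < k \<Longrightarrow> y < pr k y"
proof -
  assume k: "0 < k"
  have t: "n \<le> triangle n" for n by (induction n) auto
  have "y \<le> triangle (k + y)" using t[of "k + y"] by simp
  then show ?thesis using k by (simp add: pr_def prod_encode_def)
qed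
lemma pr_ge1: "a \<le> pr a b" by (simp add: pr_def le_prod_encode_1)
lemma pr_ge2: "b \<le> pr a b" by (simp add: pr_def le_prod_encode_2)
lemma pr_mono: "a \<le> c \<Longrightarrow> b \<le> d \<Longrightarrow> pr a b \<le> pr c d" by (simp add: pr_def prod_encode_mono)
lemma pr_strict1: "a < c \<Longrightarrow> b \<le> d \<Longrightarrow> pr a b < pr c d"
proof -
  assume "a < c" "b \<le> d"
  then have "triangle (a + b) \<le> triangle (c + d)" by (intro triangle_mono) simp
  then show ?thesis using \<open>a < c\<close> by (simp add: pr_def prod_encode_def)
qed
lemma pr_strict2: "a \<le> c \<Longrightarrow> b < d \<Longrightarrow> pr a b < pr c d"
proof -
  assume "a \<le> c" "b < d"
  then have "triangle (Suc (a + b)) \<le> triangle (c + d)" by (intro triangle_mono) simp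
  then show ?thesis using \<open>a \<le> c\<close> by (simp add: pr_def prod_encode_def)
qed

lemma enc_rexp_pr:
  "enc_rexp RZero = pr 0 0" "enc_rexp ROne = pr 1 0" "enc_rexp (RAtom g) = pr 2 (le g)"
  "enc_rexp (RTimes a b) = pr 3 (pr (enc_rexp a) (enc_rexp b))"
  "enc_rexp (RPlus a b) = pr 4 (pr (enc_rexp a) (enc_rexp b))"
  "enc_rexp (RStar a) = pr 5 (enc_rexp a)"
  by (simp_all add: pr_def)

lemma enc_rexp_inj: "enc_rexp a = enc_rexp b \<Longrightarrow> a = b"
  by (induction a arbitrary: b; case_tac b) (auto simp: enc_rexp_pr list_encode_eq)

lemma enc_form_pr:
  "enc_form Pi = pr 0 0" "enc_form (Prop p) = pr 1 p" "enc_form (Neg a) = pr 2 (enc_form a)"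
  "enc_form (And a b) = pr 3 (pr (enc_form a) (enc_form b))"
  "enc_form (K i a) = pr 4 (pr i (enc_form a))"
  "enc_form (C G a) = pr 5 (pr (le G) (enc_form a))"
  "enc_form (DiaA a) = pr 6 (enc_form a)" "enc_form (DiaBbar a) = pr 7 (enc_form a)"
  "enc_form (DiaN a) = pr 8 (enc_form a)"
  by (simp_all add: pr_def)

lemma enc_form_inj: "enc_form a = enc_form b \<Longrightarrow> a = b"
  by (induction a arbitrary: b; case_tac b) (auto simp: enc_form_pr list_encode_eq)

lemma pr_sub1: "0 < k \<Longrightarrow> a < pr k (pr a b)" by (meson le_less_trans pr_ge1 pr_gt)
lemma pr_sub2: "0 < k \<Longrightarrow> b < pr k (pr a b)" by (meson le_less_trans pr_ge2 pr_gt)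

lemma enc_rexp_sub:
  "enc_rexp a < enc_rexp (RTimes a b)" "enc_rexp b < enc_rexp (RTimes a b)"
  "enc_rexp a < enc_rexp (RPlus a b)" "enc_rexp b < enc_rexp (RPlus a b)"
  "enc_rexp a < enc_rexp (RStar a)"
  by (simp_all only: enc_rexp_pr pr_sub1 pr_sub2 pr_gt zero_less_numeral)

lemma enc_form_sub:
  "enc_form a < enc_form (Neg a)" "enc_form a < enc_form (And a b)" "enc_form b < enc_form (And a b)"
  "enc_form a < enc_form (K i a)" "enc_form a < enc_form (C G a)"
  "enc_form a < enc_form (DiaA a)" "enc_form a < enc_form (DiaBbar a)" "enc_form a < enc_form (DiaN a)"
  by (simp_all only: enc_form_pr pr_sub1 pr_sub2 pr_gt zero_less_numeral)

definition decr :: "nat \<Rightarrow> nat list rexp" where "decr z = (SOME e. enc_rexp e = z)"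
lemma decr_enc[simp]: "decr (enc_rexp e) = e"
  unfolding decr_def by (rule some_equality) (auto dest: enc_rexp_inj)

definition decf :: "nat \<Rightarrow> form" where "decf z = (SOME e. enc_form e = z)"
lemma decf_enc[simp]: "decf (enc_form e) = e"
  unfolding decf_def by (rule some_equality) (auto dest: enc_form_inj)

definition Frs :: "nat \<Rightarrow> nat \<Rightarrow> nat \<Rightarrow> nat" where
  "Frs T x q = (if pfst x = 3 \<or> pfst x = 4 then cnth T (pfst (psnd x)) + cnth T (psnd (psnd x)) + 1
     else if pfst x = 5 then cnth T (psnd x) + 1 else 1)"

definition rsizec :: "nat \<Rightarrow> nat" where "rsizec e = cnth (tab Frs e 0) e"

lemma rsizec_correct: "rsizec (enc_rexp e) = rsize e"
proof -
  have "cnth (tab Frs (enc_rexp e) 0) z = (rsize \<circ> decr) z" if "z \<in> range enc_rexp" "z \<le> enc_rexp e" for z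
  proof (rule tab_correct[OF _ that])
    fix z T assume z: "z \<in> range enc_rexp" and h: "\<And>z'. z' \<in> range enc_rexp \<Longrightarrow> z' < z \<Longrightarrow> cnth T z' = (rsize \<circ> decr) z'"
    then obtain e' where e': "z = enc_rexp e'" by blast
    have h': "cnth T (enc_rexp a) = rsize a" if "enc_rexp a < enc_rexp e'" for a
      using h[of "enc_rexp a"] that e' by simp
    show "Frs T z 0 = (rsize \<circ> decr) z"
      unfolding e' comp_def decr_enc
      using h' by (cases e') (simp_all add: Frs_def enc_rexp_pr pr_sub1 pr_sub2 pr_gt del: enc_rexp.simps)
  qed
  then show ?thesis unfolding rsizec_def by simp
qed

lemma cp_Frs: "cp (\<lambda>p. Frs (pfst p) (pfst (psnd p)) (psnd (psnd p)))"
  unfolding Frs_def by (intro cpI4)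

lemma cp_rsizec: "cp f \<Longrightarrow> cp (\<lambda>x. rsizec (f x))"
proof (rule cp_comp[of rsizec])
  show "cp rsizec" unfolding rsizec_def by (intro cp_cnth cp_tab[OF cp_Frs] cp_id cp_const)
qed



definition Fist :: "nat \<Rightarrow> nat \<Rightarrow> nat \<Rightarrow> nat" where
  "Fist T z q = (if pfst (pfst z) = 2 then cnth T (pr (psnd (pfst z)) (psnd z))
     else if pfst (pfst z) = 3 then (if cnth T (pr (pfst (psnd (pfst z))) (psnd z)) \<noteq> 0 \<or>
                                       cnth T (pr (psnd (psnd (pfst z))) (psnd z)) \<noteq> 0 then 1 else 0)
     else if 4 \<le> pfst (pfst z) \<and> pfst (pfst z) \<le> 8 then (if psnd z = pfst z then 1 else 0) else 0)"

definition istopc :: "nat \<Rightarrow> nat \<Rightarrow> nat" where "istopc x y = cnth (tab Fist (pr x y) 0) (pr x y)"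

definition hist :: "nat \<Rightarrow> nat" where
  "hist z = (if psnd z \<in> enc_form ` set (tops (decf (pfst z))) then 1 else 0)"

lemma pfst_psnd_pr_enc: "pr (pfst z) (psnd z) = z"
  by (simp add: pfst_def psnd_def pr_def)

lemma istopc_correct: "istopc (enc_form \<phi>) y = (if y \<in> enc_form ` set (tops \<phi>) then 1 else 0)"
proof -
  let ?G = "{pr (enc_form \<phi>) y | \<phi> y. True}"
  have "cnth (tab Fist (pr (enc_form \<phi>) y) 0) z = hist z" if "z \<in> ?G" "z \<le> pr (enc_form \<phi>) y" for z
  proof (rule tab_correct[OF _ that])
    fix z T assume z: "z \<in> ?G" and h: "\<And>z'. z' \<in> ?G \<Longrightarrow> z' < z \<Longrightarrow> cnth T z' = hist z'"
    then obtain \<psi> w where e': "z = pr (enc_form \<psi>) w" by blast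
    have h': "cnth T (pr (enc_form a) w) = (if w \<in> enc_form ` set (tops a) then 1 else 0)"
      if "enc_form a < enc_form \<psi>" for a
    proof -
      have "pr (enc_form a) w \<in> ?G" by blast
      moreover have "pr (enc_form a) w < z" using that e' by (simp add: pr_strict1)
      ultimately have "cnth T (pr (enc_form a) w) = hist (pr (enc_form a) w)" by (rule h)
      then show ?thesis by (simp add: hist_def)
    qed
    show "Fist T z 0 = hist z"
      unfolding e' hist_def pfst_pr psnd_pr decf_enc using h'
      by (cases \<psi>) (auto simp: Fist_def enc_form_pr pr_sub1 pr_sub2 pr_gt simp del: enc_form.simps)
  qed
  moreover have "pr (enc_form \<phi>) y \<in> ?G" by blast
  ultimately have "cnth (tab Fist (pr (enc_form \<phi>) y) 0) (pr (enc_form \<phi>) y) = hist (pr (enc_form \<phi>) y)" by blast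
  then show ?thesis unfolding istopc_def by (simp add: hist_def)
qed

lemma cp_Fist: "cp (\<lambda>p. Fist (pfst p) (pfst (psnd p)) (psnd (psnd p)))"
  unfolding Fist_def by (intro cpI4)

lemma cp_istopc: "cp f \<Longrightarrow> cp g \<Longrightarrow> cp (\<lambda>x. istopc (f x) (g x))"
proof (rule cp2_lift[of istopc])
  show "cp (\<lambda>p. istopc (pfst p) (psnd p))" unfolding istopc_def
    by (intro cp_cnth cp_tab[OF cp_Fist] cpI4)
qed

definition margc :: "nat \<Rightarrow> nat" where
  "margc y = (if pfst y = 4 \<or> pfst y = 5 then psnd (psnd y) else psnd y)"

definition cardc :: "nat \<Rightarrow> nat" where "cardc isc = (\<Prod>i<Suc (nagc isc). cnth (locsc isc) i)"
definition fbasec :: "nat \<Rightarrow> nat" where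
  "fbasec isc = 2 * cardc isc ^ 2 * (\<Prod>k<clen (lamc isc). 2 ^ rsizec (cnth (lamc isc) k))"

definition Ffis :: "nat \<Rightarrow> nat \<Rightarrow> nat \<Rightarrow> nat" where
  "Ffis T x q = fbasec q * (\<Prod>y<Suc x. if istopc x y \<noteq> 0 then 2 ^ cnth T (margc y) else 1)"

definition fisT :: "nat \<Rightarrow> nat \<Rightarrow> nat" where "fisT isc x = tab Ffis x isc"

lemma card_lists_bounded: "card {g. length g = length L \<and> (\<forall>i<length L. g ! i < L ! i)} = prod_list L"
proof (induction L)
  case Nil then show ?case by simp
next
  case (Cons a L)
  let ?S = "\<lambda>L. {g. length g = length L \<and> (\<forall>i<length L. g ! i < L ! i)}"
  have eq: "?S (a # L) = (\<lambda>(x, g). x # g) ` ({..<a} \<times> ?S L)"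
  proof (rule set_eqI, rule iffI)
    fix g assume "g \<in> ?S (a # L)"
    then have g0: "length g = Suc (length L)" "\<forall>i<Suc (length L). g ! i < (a # L) ! i" by auto
    then obtain x g' where gx: "g = x # g'" by (cases g) auto
    have "x < a" using g0 gx by auto
    moreover have "g' \<in> ?S L"
    proof -
      have "\<forall>i<length L. g' ! i < L ! i"
      proof (intro allI impI)
        fix i assume "i < length L"
        then have "g ! Suc i < (a # L) ! Suc i" using g0 by blast
        then show "g' ! i < L ! i" using gx by simp
      qed
      then show ?thesis using g0 gx by simp
    qed
    ultimately have g: "g = x # g'" "x < a" "g' \<in> ?S L" using gx by auto
    then show "g \<in> (\<lambda>(x, g). x # g) ` ({..<a} \<times> ?S L)" by force
  next
    fix g assume "g \<in> (\<lambda>(x, g). x # g) ` ({..<a} \<times> ?S L)"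
    then show "g \<in> ?S (a # L)" by (auto simp: nth_Cons split: nat.split)
  qed
  have "inj_on (\<lambda>(x, g). x # g) ({..<a} \<times> ?S L)" by (auto simp: inj_on_def)
  then have "card (?S (a # L)) = a * card (?S L)"
    unfolding eq by (simp add: card_image card_cartesian_product)
  then show ?case using Cons by simp
qed

lemma prod_list_nth: "prod_list xs = (\<Prod>i<length xs. xs ! i)"
  by (induction xs) (simp_all add: prod.lessThan_Suc_shift del: prod.lessThan_Suc)

lemma card_gstates: "wf_isrl IS \<Longrightarrow> card (gstates IS) = prod_list (locs IS)"
proof -
  assume wf: "wf_isrl IS"
  have "gstates IS = {g. length g = length (locs IS) \<and> (\<forall>i<length (locs IS). g ! i < locs IS ! i)}"
    using wf by (auto simp: gstates_def wfD less_Suc_eq_le)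
  then show ?thesis by (simp add: card_lists_bounded)
qed

lemma fbasec_correct: "wf_isrl IS \<Longrightarrow> fbasec (enc_isrl IS) = fbase IS"
proof -
  assume wf: "wf_isrl IS"
  have "cardc (enc_isrl IS) = card (gstates IS)"
    using wf by (simp add: cardc_def card_gstates prod_list_nth wfD)
  moreover have "(\<Prod>k<clen (lamc (enc_isrl IS)). (2::nat) ^ rsizec (cnth (lamc (enc_isrl IS)) k)) =
     (\<Prod>q<length (lam IS). 2 ^ rsize (lam IS ! q))"
    by (simp add: rsizec_correct)
  ultimately show ?thesis by (simp add: fbasec_def fbase_def)
qed

lemma tops_props: "\<chi> \<in> set (tops \<phi>) \<Longrightarrow>
   enc_form (marg \<chi>) < enc_form \<chi> \<and> enc_form \<chi> \<le> enc_form \<phi> \<and> margc (enc_form \<chi>) = enc_form (marg \<chi>)"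
proof (induction \<phi> rule: tops.induct)
  case (3 a) then show ?case using enc_form_sub(1)[of a] by (auto simp del: enc_form.simps)
next
  case (4 a b) then show ?case using enc_form_sub(2)[where a=a and b=b] enc_form_sub(3)[where a=a and b=b] by (auto simp del: enc_form.simps)
qed (auto simp: margc_def enc_form_pr pr_gt pr_sub1 pr_sub2 simp del: enc_form.simps)

lemma fisT_correct:
  assumes wf: "wf_isrl IS"
  shows "enc_form \<psi> \<le> x \<Longrightarrow> cnth (fisT (enc_isrl IS) x) (enc_form \<psi>) = fIS IS \<psi>"
proof -
  assume le: "enc_form \<psi> \<le> x"
  have "cnth (tab Ffis x (enc_isrl IS)) z = (fIS IS \<circ> decf) z" if "z \<in> range enc_form" "z \<le> x" for z
  proof (rule tab_correct[OF _ that])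
    fix z T assume z: "z \<in> range enc_form" and h: "\<And>z'. z' \<in> range enc_form \<Longrightarrow> z' < z \<Longrightarrow> cnth T z' = (fIS IS \<circ> decf) z'"
    then obtain \<phi> where e': "z = enc_form \<phi>" by blast
    let ?S = "enc_form ` set (tops \<phi>)"
    let ?g = "\<lambda>y. (2::nat) ^ cnth T (margc y)"
    have "(\<Prod>y<Suc z. if istopc z y \<noteq> 0 then ?g y else 1) = (\<Prod>y<Suc z. if y \<in> ?S then ?g y else 1)"
      unfolding e' by (intro prod.cong refl) (simp add: istopc_correct)
    also have "\<dots> = prod ?g ({..<Suc z} \<inter> ?S)" by (simp add: prod.inter_restrict)
    also have "{..<Suc z} \<inter> ?S = ?S" using tops_props e' by (auto simp: less_Suc_eq_le)
    also have "prod ?g ?S = prod (?g \<circ> enc_form) (set (tops \<phi>))"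
      by (rule prod.reindex) (auto simp: inj_on_def dest: enc_form_inj)
    also have "\<dots> = prod (\<lambda>\<chi>. 2 ^ fIS IS (marg \<chi>)) (set (tops \<phi>))"
    proof (rule prod.cong[OF refl])
      fix \<chi> assume c: "\<chi> \<in> set (tops \<phi>)"
      then have "enc_form (marg \<chi>) < z" "margc (enc_form \<chi>) = enc_form (marg \<chi>)"
        using tops_props[OF c] e' by auto
      then show "(?g \<circ> enc_form) \<chi> = 2 ^ fIS IS (marg \<chi>)" using h[of "enc_form (marg \<chi>)"] by simp
    qed
    also have "\<dots> = prod_list (map (\<lambda>\<chi>. 2 ^ fIS IS (marg \<chi>)) (remdups (tops \<phi>)))"
      by (rule prod.set_conv_list)
    finally show "Ffis T z (enc_isrl IS) = (fIS IS \<circ> decf) z"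
      unfolding Ffis_def using e' fbasec_correct[OF wf] fIS_eq[of IS \<phi>] by simp
  qed
  then show ?thesis using le unfolding fisT_def by simp
qed

lemma cp_fisT: "cp f \<Longrightarrow> cp g \<Longrightarrow> cp (\<lambda>x. fisT (f x) (g x))"
proof (rule cp2_lift[of fisT])
  have "cp (\<lambda>p. Ffis (pfst p) (pfst (psnd p)) (psnd (psnd p)))"
    unfolding Ffis_def fbasec_def cardc_def margc_def isc_defs by (intro cpI4 cp_istopc cp_rsizec)
  then show "cp (\<lambda>p. fisT (pfst p) (psnd p))" unfolding fisT_def
    by (intro cp_tab cpI4)
qed



lemma lang_times: "ws \<in> lang (RTimes a b) \<longleftrightarrow> (\<exists>k\<le>length ws. take k ws \<in> lang a \<and> drop k ws \<in> lang b)"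
proof
  assume "ws \<in> lang (RTimes a b)"
  then obtain u v where "ws = u @ v" "u \<in> lang a" "v \<in> lang b" by auto
  then show "\<exists>k\<le>length ws. take k ws \<in> lang a \<and> drop k ws \<in> lang b"
    by (intro exI[of _ "length u"]) simp
next
  assume "\<exists>k\<le>length ws. take k ws \<in> lang a \<and> drop k ws \<in> lang b"
  then obtain k where "take k ws \<in> lang a" "drop k ws \<in> lang b" by blast
  moreover have "ws = take k ws @ drop k ws" by simp
  ultimately show "ws \<in> lang (RTimes a b)" unfolding lang.simps by blast
qed

lemma concat_filter_ne: "concat (filter (\<lambda>w. w \<noteq> []) wss) = concat wss"
  by (induction wss) auto

lemma lang_star: "ws \<in> lang (RStar e) \<longleftrightarrow>
  ws = [] \<or> (\<exists>k<length ws. take (Suc k) ws \<in> lang e \<and> drop (Suc k) ws \<in> lang (RStar e))"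
proof
  assume "ws \<in> lang (RStar e)"
  then obtain wss where ws: "ws = concat wss" "\<forall>w\<in>set wss. w \<in> lang e" by auto
  let ?f = "filter (\<lambda>w. w \<noteq> []) wss"
  show "ws = [] \<or> (\<exists>k<length ws. take (Suc k) ws \<in> lang e \<and> drop (Suc k) ws \<in> lang (RStar e))"
  proof (cases ?f)
    case Nil
    then have "ws = []" using ws concat_filter_ne[of wss] by simp
    then show ?thesis by simp
  next
    case (Cons u rest)
    have uf: "u \<in> set ?f" "set rest \<subseteq> set ?f" using Cons by auto
    then have u: "u \<noteq> []" "u \<in> lang e" using ws by auto
    have r: "\<forall>w\<in>set rest. w \<in> lang e" using uf ws by auto
    have wsu: "ws = u @ concat rest" using Cons ws concat_filter_ne[of wss] by simp
    have "take (Suc (length u - 1)) ws = u" "drop (Suc (length u - 1)) ws = concat rest"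
      using u(1) wsu by simp_all
    moreover have "length u - 1 < length ws" using u(1) wsu by (cases u) auto
    moreover have "concat rest \<in> lang (RStar e)" using r by auto
    ultimately show ?thesis using u by (intro disjI2 exI[of _ "length u - 1"]) auto
  qed
next
  assume "ws = [] \<or> (\<exists>k<length ws. take (Suc k) ws \<in> lang e \<and> drop (Suc k) ws \<in> lang (RStar e))"
  then show "ws \<in> lang (RStar e)"
  proof
    assume "ws = []"
    then show ?thesis by (auto intro!: exI[of _ "[]"])
  next
    assume "\<exists>k<length ws. take (Suc k) ws \<in> lang e \<and> drop (Suc k) ws \<in> lang (RStar e)"
    then obtain k wss where k: "take (Suc k) ws \<in> lang e" "drop (Suc k) ws = concat wss" "\<forall>w\<in>set wss. w \<in> lang e"
      by auto
    have "ws = concat (take (Suc k) ws # wss)" using k(2) by (simp add: k(2)[symmetric])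
    then show ?thesis using k by (auto intro!: exI[of _ "take (Suc k) ws # wss"])
  qed
qed

lemma le_take_le: "le (take k xs) \<le> le xs"
proof (induction xs arbitrary: k)
  case (Cons x xs) then show ?case by (cases k) (auto simp: prod_encode_mono)
qed simp

lemma le_drop_le: "le (drop k xs) \<le> le xs"
proof (induction xs arbitrary: k)
  case (Cons x xs)
  then show ?case
  proof (cases k)
    case (Suc m)
    have "le (drop m xs) \<le> le xs" by (rule Cons.IH)
    also have "\<dots> < le (x # xs)" using le_prod_encode_2[of "le xs" x] by simp
    finally show ?thesis using Suc by simp
  qed simp
qed simp

lemma le_drop_less: "xs \<noteq> [] \<Longrightarrow> le (drop (Suc k) xs) < le xs"
proof -
  assume "xs \<noteq> []"
  then obtain x ys where "xs = x # ys" by (cases xs) auto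
  moreover have "le (drop k ys) \<le> le ys" by (rule le_drop_le)
  moreover have "le ys < le (x # ys)" using le_prod_encode_2[of "le ys" x] by simp
  ultimately show ?thesis by simp
qed

definition Freg :: "nat \<Rightarrow> nat \<Rightarrow> nat \<Rightarrow> nat" where
  "Freg T z q = (if pfst (pfst z) = 1 then (if psnd z = 0 then 1 else 0)
     else if pfst (pfst z) = 2 then (if psnd z = ccons (psnd (pfst z)) 0 then 1 else 0)
     else if pfst (pfst z) = 3 then (if \<exists>k<Suc (clen (psnd z)).
          cnth T (pr (pfst (psnd (pfst z))) (ctake k (psnd z))) \<noteq> 0 \<and>
          cnth T (pr (psnd (psnd (pfst z))) (cdrop k (psnd z))) \<noteq> 0 then 1 else 0)
     else if pfst (pfst z) = 4 then (if cnth T (pr (pfst (psnd (pfst z))) (psnd z)) \<noteq> 0 \<or>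
          cnth T (pr (psnd (psnd (pfst z))) (psnd z)) \<noteq> 0 then 1 else 0)
     else if pfst (pfst z) = 5 then (if psnd z = 0 \<or> (\<exists>k<clen (psnd z).
          cnth T (pr (psnd (pfst z)) (ctake (Suc k) (psnd z))) \<noteq> 0 \<and>
          cnth T (pr (pfst z) (cdrop (Suc k) (psnd z))) \<noteq> 0) then 1 else 0)
     else 0)"

definition rmatch :: "nat \<Rightarrow> nat \<Rightarrow> nat" where "rmatch e w = cnth (tab Freg (pr e w) 0) (pr e w)"

definition hreg :: "nat \<Rightarrow> nat" where
  "hreg z = (if map ld (ld (psnd z)) \<in> lang (decr (pfst z)) then 1 else 0)"

lemma rmatch_correct: "rmatch (enc_rexp e) (le ws) = (if map ld ws \<in> lang e then 1 else 0)"
proof -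
  let ?G = "{pr (enc_rexp e) w | e w. True}"
  have "cnth (tab Freg (pr (enc_rexp e) (le ws)) 0) z = hreg z" if "z \<in> ?G" "z \<le> pr (enc_rexp e) (le ws)" for z
  proof (rule tab_correct[OF _ that])
    fix z T assume z: "z \<in> ?G" and h: "\<And>z'. z' \<in> ?G \<Longrightarrow> z' < z \<Longrightarrow> cnth T z' = hreg z'"
    then obtain e' w where e': "z = pr (enc_rexp e') w" by blast
    define vs where "vs = ld w"
    have w: "w = le vs" by (simp add: vs_def)
    have h': "cnth T (pr (enc_rexp a) (le us)) = (if map ld us \<in> lang a then 1 else 0)"
      if "enc_rexp a < enc_rexp e'" "le us \<le> w" for a us
    proof -
      have "pr (enc_rexp a) (le us) \<in> ?G" by blast
      moreover have "pr (enc_rexp a) (le us) < z" using that e' by (simp add: pr_strict1)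
      ultimately have "cnth T (pr (enc_rexp a) (le us)) = hreg (pr (enc_rexp a) (le us))" by (rule h)
      then show ?thesis by (simp add: hreg_def)
    qed
    have h'': "cnth T (pr (enc_rexp e') (le us)) = (if map ld us \<in> lang e' then 1 else 0)"
      if "le us < w" for us
    proof -
      have "pr (enc_rexp e') (le us) \<in> ?G" by blast
      moreover have "pr (enc_rexp e') (le us) < z" using that e' by (simp add: pr_strict2)
      ultimately have "cnth T (pr (enc_rexp e') (le us)) = hreg (pr (enc_rexp e') (le us))" by (rule h)
      then show ?thesis by (simp add: hreg_def)
    qed
    have hz: "hreg z = (if map ld vs \<in> lang e' then 1 else 0)"
      unfolding e' hreg_def pfst_pr psnd_pr decr_enc vs_def ..
    have fz: "Freg T z 0 = Freg T (pr (enc_rexp e') (le vs)) 0" using e' w by simp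
    have main: "Freg T (pr (enc_rexp e') (le vs)) 0 = (if map ld vs \<in> lang e' then 1 else 0)"
    proof (cases e')
      case RZero then show ?thesis by (simp add: Freg_def enc_rexp_pr del: enc_rexp.simps)
    next
      case ROne then show ?thesis by (simp add: Freg_def enc_rexp_pr w del: enc_rexp.simps)
    next
      case (RAtom g)
      have vv: "vs = map le (map ld vs)" by (simp add: comp_def)
      have "(vs = [le g]) = (map ld vs = [g])"
      proof
        assume "map ld vs = [g]"
        then show "vs = [le g]" using vv by simp
      qed simp
      moreover have "ccons (le g) 0 = le [le g]" by (simp add: ccons_def pr_def)
      ultimately have "(le vs = ccons (le g) 0) = (map ld vs = [g])"
        by (simp only: list_encode_eq)
      then show ?thesis by (simp add: Freg_def enc_rexp_pr RAtom del: enc_rexp.simps list_encode.simps)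
    next
      case (RTimes a b)
      have A: "(cnth T (pr (enc_rexp a) (ctake k (le vs))) \<noteq> 0) = (take k (map ld vs) \<in> lang a)" if "k \<le> length vs" for k
      proof -
        have "ctake k (le vs) = le (take k vs)" using that by simp
        moreover have "le (take k vs) \<le> w" using w le_take_le by simp
        ultimately show ?thesis using h'[of a "take k vs"] RTimes enc_rexp_sub by (simp add: take_map)
      qed
      have B: "(cnth T (pr (enc_rexp b) (cdrop k (le vs))) \<noteq> 0) = (drop k (map ld vs) \<in> lang b)" for k
      proof -
        have "cdrop k (le vs) = le (drop k vs)" by simp
        moreover have "le (drop k vs) \<le> w" using w le_drop_le by simp
        ultimately show ?thesis using h'[of b "drop k vs"] RTimes enc_rexp_sub by (simp add: drop_map)
      qed
      have "(\<exists>k<Suc (clen (le vs)). cnth T (pr (enc_rexp a) (ctake k (le vs))) \<noteq> 0 \<and> cnth T (pr (enc_rexp b) (cdrop k (le vs))) \<noteq> 0)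
        = (\<exists>k\<le>length (map ld vs). take k (map ld vs) \<in> lang a \<and> drop k (map ld vs) \<in> lang b)"
        using A B by (auto simp: less_Suc_eq_le)
      then show ?thesis by (simp only: Freg_def enc_rexp_pr RTimes lang_times pfst_pr psnd_pr) simp
    next
      case (RPlus a b)
      have "(cnth T (pr (enc_rexp a) (le vs)) \<noteq> 0 \<or> cnth T (pr (enc_rexp b) (le vs)) \<noteq> 0) =
          (map ld vs \<in> lang a \<or> map ld vs \<in> lang b)"
        using h'[of a vs] h'[of b vs] RPlus enc_rexp_sub w by auto
      then show ?thesis by (simp add: Freg_def enc_rexp_pr RPlus del: enc_rexp.simps)
    next
      case (RStar a)
      have A: "(cnth T (pr (enc_rexp a) (ctake (Suc k) (le vs))) \<noteq> 0) = (take (Suc k) (map ld vs) \<in> lang a)" if "k < length vs" for k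
      proof -
        have "ctake (Suc k) (le vs) = le (take (Suc k) vs)" using that by simp
        moreover have "le (take (Suc k) vs) \<le> w" using w le_take_le by simp
        ultimately show ?thesis using h'[of a "take (Suc k) vs"] RStar enc_rexp_sub by (simp add: take_map)
      qed
      have B: "(cnth T (pr (enc_rexp e') (cdrop (Suc k) (le vs))) \<noteq> 0) = (drop (Suc k) (map ld vs) \<in> lang (RStar a))" if "k < length vs" for k
      proof -
        have "cdrop (Suc k) (le vs) = le (drop (Suc k) vs)" by simp
        moreover have "vs \<noteq> []" using that by auto
        then have "le (drop (Suc k) vs) < w" using w le_drop_less[of vs k] by simp
        ultimately show ?thesis using h''[of "drop (Suc k) vs"] RStar by (simp add: drop_map del: lang.simps)
      qed
      have "(le vs = 0 \<or> (\<exists>k<clen (le vs). cnth T (pr (enc_rexp a) (ctake (Suc k) (le vs))) \<noteq> 0 \<and> cnth T (pr (enc_rexp e') (cdrop (Suc k) (le vs))) \<noteq> 0))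
        = (map ld vs = [] \<or> (\<exists>k<length (map ld vs). take (Suc k) (map ld vs) \<in> lang a \<and> drop (Suc k) (map ld vs) \<in> lang (RStar a)))"
        using A B by (auto simp del: lang.simps)
      then show ?thesis by (simp only: Freg_def enc_rexp_pr RStar lang_star[of "map ld vs" a] pfst_pr psnd_pr) simp
    qed
    show "Freg T z 0 = hreg z" using hz fz main by simp
  qed
  moreover have "pr (enc_rexp e) (le ws) \<in> ?G" by blast
  ultimately have "cnth (tab Freg (pr (enc_rexp e) (le ws)) 0) (pr (enc_rexp e) (le ws)) = hreg (pr (enc_rexp e) (le ws))" by blast
  then show ?thesis unfolding rmatch_def by (simp add: hreg_def)
qed

lemma cp_Freg: "cp (\<lambda>p. Freg (pfst p) (pfst (psnd p)) (psnd (psnd p)))"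
  unfolding Freg_def by (intro cpI4)

lemma cp_rmatch: "cp f \<Longrightarrow> cp g \<Longrightarrow> cp (\<lambda>x. rmatch (f x) (g x))"
proof (rule cp2_lift[of rmatch])
  show "cp (\<lambda>p. rmatch (pfst p) (psnd p))" unfolding rmatch_def
    by (intro cp_cnth cp_tab[OF cp_Freg] cpI4)
qed



definition look :: "nat \<Rightarrow> nat \<Rightarrow> nat \<Rightarrow> nat" where "look T a c = cnth (cnth T a) c"

definition bitc :: "nat \<Rightarrow> nat \<Rightarrow> nat \<Rightarrow> nat \<Rightarrow> nat \<Rightarrow> nat \<Rightarrow> nat" where
  "bitc T x c isc B FT =
    (if pfst x = 0 then (if clen c = 1 then 1 else 0)
     else if pfst x = 1 then rmatch (cnth (lamc isc) (psnd x)) c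
     else if pfst x = 2 then (if look T (psnd x) c = 0 then 1 else 0)
     else if pfst x = 3 then (if look T (pfst (psnd x)) c \<noteq> 0 \<and> look T (psnd (psnd x)) c \<noteq> 0 then 1 else 0)
     else if pfst x = 4 then (if \<forall>c'<Suc B. simc isc (pfst (psnd x)) c c' \<longrightarrow> look T (psnd (psnd x)) c' \<noteq> 0 then 1 else 0)
     else if pfst x = 5 then (if \<forall>c'<Suc B. (\<exists>p<Suc (PB B). pathc (\<lambda>u v. u \<le> B \<and> v \<le> B \<and>
              (\<exists>k<clen (pfst (psnd x)). simc isc (cnth (pfst (psnd x)) k) u v)) p c c') \<longrightarrow> look T (psnd (psnd x)) c' \<noteq> 0 then 1 else 0)
     else if pfst x = 6 then (if c \<noteq> 0 \<and> (\<exists>c'<Suc B. validc isc c' \<and> clen c' \<le> clen c + cnth FT (psnd x) \<and>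
              cnth c' 0 = clast c \<and> look T (psnd x) c' \<noteq> 0) then 1 else 0)
     else if pfst x = 7 then (if c \<noteq> 0 \<and> (\<exists>c'<Suc B. validc isc c' \<and> clen c' \<le> clen c + cnth FT (psnd x) \<and>
              clen c < clen c' \<and> ctake (clen c) c' = c \<and> look T (psnd x) c' \<noteq> 0) then 1 else 0)
     else if pfst x = 8 then (if c \<noteq> 0 \<and> (\<exists>c'<Suc B. validc isc c' \<and> clen c' \<le> clen c + cnth FT (psnd x) \<and>
              tGc isc (clast c) (cnth c' 0) \<and> look T (psnd x) c' \<noteq> 0) then 1 else 0)
     else 0)"

definition Fsem :: "nat \<Rightarrow> nat \<Rightarrow> nat \<Rightarrow> nat" where
  "Fsem T x q = ctab (\<lambda>c. bitc T x c (pfst q) (pfst (psnd q)) (psnd (psnd q))) (Suc (pfst (psnd q)))"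

lemma cp_Fsem: "cp (\<lambda>p. Fsem (pfst p) (pfst (psnd p)) (psnd (psnd p)))"
  unfolding Fsem_def bitc_def look_def pathc_def lamc_def by (intro cpI4 cp_rmatch)

definition hsem :: "isrl \<Rightarrow> nat \<Rightarrow> nat \<Rightarrow> nat" where
  "hsem IS B z = ctab (\<lambda>c. if semT IS B (decf z) (dec c) then 1 else 0) (Suc B)"

lemma ex_cnth_P: "(\<exists>k<clen (le xs). P (cnth (le xs) k)) = (\<exists>x\<in>set xs. P x)"
proof
  assume "\<exists>k<clen (le xs). P (cnth (le xs) k)"
  then obtain k where "k < length xs" "P (cnth (le xs) k)" by auto
  then show "\<exists>x\<in>set xs. P x" by (intro bexI[of _ "xs ! k"]) auto
next
  assume "\<exists>x\<in>set xs. P x"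
  then obtain k where "k < length xs" "P (xs ! k)" by (auto simp: in_set_conv_nth)
  then show "\<exists>k<clen (le xs). P (cnth (le xs) k)" by (intro exI[of _ k]) auto
qed

lemma all_codes: "(\<forall>c'<Suc B. P c') = (\<forall>gs'. cg gs' \<le> B \<longrightarrow> P (cg gs'))"
proof
  assume h: "\<forall>gs'. cg gs' \<le> B \<longrightarrow> P (cg gs')"
  show "\<forall>c'<Suc B. P c'"
  proof (intro allI impI)
    fix c' assume "c' < Suc B"
    then show "P c'" using h[rule_format, of "dec c'"] by simp
  qed
qed auto

lemma ex_codes: "(\<exists>c'<Suc B. P c') = (\<exists>gs'. cg gs' \<le> B \<and> P (cg gs'))"
proof
  assume "\<exists>c'<Suc B. P c'"
  then obtain c' where "c' < Suc B" "P c'" by blast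
  then show "\<exists>gs'. cg gs' \<le> B \<and> P (cg gs')" by (intro exI[of _ "dec c'"]) simp
next
  assume "\<exists>gs'. cg gs' \<le> B \<and> P (cg gs')"
  then obtain gs' where "cg gs' \<le> B" "P (cg gs')" by blast
  then show "\<exists>c'<Suc B. P c'" by (intro exI[of _ "cg gs'"]) simp
qed

lemma clast_cg: "gs \<noteq> [] \<Longrightarrow> clast (cg gs) = le (last gs)" by (simp add: cg_def last_map)
lemma cnth_cg0: "gs \<noteq> [] \<Longrightarrow> cnth (cg gs) 0 = le (hd gs)" by (simp add: cnth_cg hd_conv_nth)
lemma ctake_cg: "k \<le> length gs \<Longrightarrow> ctake k (cg gs) = cg (take k gs)" by (simp add: cg_def take_map)

lemma Fsem_correct:
  assumes wf: "wf_isrl IS" and wfp: "wf_form IS \<phi>" and leX: "enc_form \<phi> \<le> X"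
    and T: "\<And>\<psi>. wf_form IS \<psi> \<Longrightarrow> enc_form \<psi> < enc_form \<phi> \<Longrightarrow> cnth T (enc_form \<psi>) = hsem IS B (enc_form \<psi>)"
  shows "Fsem T (enc_form \<phi>) (pr (enc_isrl IS) (pr B (fisT (enc_isrl IS) X))) = hsem IS B (enc_form \<phi>)"
proof -
  let ?isc = "enc_isrl IS"
  let ?FT = "fisT (enc_isrl IS) X"
  have L: "(look T (enc_form a) c' \<noteq> 0) = semT IS B a (dec c')"
    if "wf_form IS a" "enc_form a < enc_form \<phi>" "c' \<le> B" for a c'
    using T[OF that(1,2)] that(3) by (simp add: look_def hsem_def cnth_tab less_Suc_eq_le del: ctab_le)
  have FT: "cnth ?FT (enc_form a) = fIS IS a" if "enc_form a < enc_form \<phi>" for a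
    using fisT_correct[OF wf, of a X] that leX by simp
  have bit: "bitc T (enc_form \<phi>) (cg gs) ?isc B ?FT = (if semT IS B \<phi> gs then 1 else 0)"
    if cB: "cg gs \<le> B" for gs
  proof (cases \<phi>)
    case Pi then show ?thesis by (simp add: bitc_def enc_form_pr del: enc_form.simps)
  next
    case (Prop p)
    then have p: "p < length (lam IS)" using wfp by simp
    then have "rmatch (cnth (lamc ?isc) p) (cg gs) = (if gs \<in> lang (lam IS ! p) then 1 else 0)"
      using rmatch_correct[of "lam IS ! p" "map le gs"] by (simp add: cg_def comp_def)
    then show ?thesis using Prop by (simp add: bitc_def enc_form_pr del: enc_form.simps)
  next
    case (Neg a)
    then have "(look T (enc_form a) (cg gs) \<noteq> 0) = semT IS B a gs"
      using L[of a "cg gs"] wfp cB enc_form_sub by simp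
    then have "(look T (enc_form a) (cg gs) = 0) = (\<not> semT IS B a gs)" by auto
    then show ?thesis using Neg by (simp add: bitc_def enc_form_pr del: enc_form.simps)
  next
    case (And a b)
    then have "(look T (enc_form a) (cg gs) \<noteq> 0) = semT IS B a gs"
       "(look T (enc_form b) (cg gs) \<noteq> 0) = semT IS B b gs"
      using L[of a "cg gs"] L[of b "cg gs"] wfp cB enc_form_sub by simp_all
    then show ?thesis using And by (simp add: bitc_def enc_form_pr del: enc_form.simps)
  next
    case (K i a)
    then have i: "i \<le> nag IS" and wa: "wf_form IS a" using wfp by auto
    have "(\<forall>c'<Suc B. simc ?isc i (cg gs) c' \<longrightarrow> look T (enc_form a) c' \<noteq> 0) =
          (\<forall>gs'. cg gs' \<le> B \<longrightarrow> simG IS i gs gs' \<longrightarrow> semT IS B a gs')"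
      unfolding all_codes using L[OF wa] K enc_form_sub simc_correct[OF wf i] by auto
    then show ?thesis using K by (simp add: bitc_def enc_form_pr del: enc_form.simps)
  next
    case (C G a)
    then have G: "\<forall>i\<in>set G. i \<le> nag IS" and wa: "wf_form IS a" using wfp by auto
    let ?rc = "\<lambda>u v. u \<le> B \<and> v \<le> B \<and> (\<exists>k<clen (le G). simc ?isc (cnth (le G) k) u v)"
    let ?Rb = "\<lambda>x y. cg x \<le> B \<and> cg y \<le> B \<and> (\<exists>i\<in>set G. simG IS i x y)"
    have rc: "?rc u v = ?Rb (dec u) (dec v)" for u v
    proof -
      have "(\<exists>k<clen (le G). simc ?isc (cnth (le G) k) u v) = (\<exists>i\<in>set G. simc ?isc i u v)"
        by (rule ex_cnth_P)
      also have "\<dots> = (\<exists>i\<in>set G. simG IS i (dec u) (dec v))"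
        using simc_correct[OF wf, of _ "dec u" "dec v"] G by auto
      finally show ?thesis by simp
    qed
    have tr: "?rc\<^sup>+\<^sup>+ (cg gs) (cg gs') = ?Rb\<^sup>+\<^sup>+ gs gs'" for gs'
      by (rule tranclp_bij[of ?rc ?Rb dec cg, OF rc]) simp_all
    have pa: "?rc\<^sup>+\<^sup>+ u v = (\<exists>p<Suc (PB B). pathc ?rc p u v)" for u v
      using tranclp_pathc[of ?rc B u v] by (simp add: less_Suc_eq_le)
    have "(\<forall>c'<Suc B. (\<exists>p<Suc (PB B). pathc ?rc p (cg gs) c') \<longrightarrow> look T (enc_form a) c' \<noteq> 0) =
          (\<forall>gs'. cg gs' \<le> B \<longrightarrow> ?Rb\<^sup>+\<^sup>+ gs gs' \<longrightarrow> semT IS B a gs')"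
      unfolding all_codes pa[symmetric] tr using L[OF wa] C enc_form_sub by auto
    then show ?thesis using C by (simp add: bitc_def enc_form_pr del: enc_form.simps)
  next
    case (DiaA a)
    then have wa: "wf_form IS a" using wfp by auto
    have lt: "enc_form a < enc_form \<phi>" using DiaA enc_form_sub by simp
    have "(cg gs \<noteq> 0 \<and> (\<exists>c'<Suc B. validc ?isc c' \<and> clen c' \<le> clen (cg gs) + cnth ?FT (enc_form a) \<and>
              cnth c' 0 = clast (cg gs) \<and> look T (enc_form a) c' \<noteq> 0)) =
          (gs \<noteq> [] \<and> (\<exists>gs'. cg gs' \<le> B \<and> validG IS gs' \<and> length gs' \<le> length gs + fIS IS a \<and>
              hd gs' = last gs \<and> semT IS B a gs'))"
    proof -
      have P: "(validc ?isc (cg gs') \<and> clen (cg gs') \<le> clen (cg gs) + cnth ?FT (enc_form a) \<and>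
              cnth (cg gs') 0 = clast (cg gs) \<and> look T (enc_form a) (cg gs') \<noteq> 0) =
           (validG IS gs' \<and> length gs' \<le> length gs + fIS IS a \<and> hd gs' = last gs \<and> semT IS B a gs')"
        if "cg gs' \<le> B" "gs \<noteq> []" for gs'
      proof (cases "validG IS gs'")
        case True
        then have "gs' \<noteq> []" by (simp add: validG_def)
        then show ?thesis using True that L[OF wa lt that(1)] FT[OF lt] validc_correct[OF wf]
          by (simp add: cnth_cg0 clast_cg list_encode_eq)
      qed (simp add: validc_correct[OF wf])
      show ?thesis
      proof (cases "gs = []")
        case False
        then show ?thesis using P[OF _ False] by (simp only: ex_codes cg_0 simp_thms) blast
      qed simp
    qed
    then show ?thesis using DiaA by (simp add: bitc_def enc_form_pr del: enc_form.simps)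
  next
    case (DiaBbar a)
    then have wa: "wf_form IS a" using wfp by auto
    have lt: "enc_form a < enc_form \<phi>" using DiaBbar enc_form_sub by simp
    have "(cg gs \<noteq> 0 \<and> (\<exists>c'<Suc B. validc ?isc c' \<and> clen c' \<le> clen (cg gs) + cnth ?FT (enc_form a) \<and>
              clen (cg gs) < clen c' \<and> ctake (clen (cg gs)) c' = cg gs \<and> look T (enc_form a) c' \<noteq> 0)) =
          (gs \<noteq> [] \<and> (\<exists>gs'. cg gs' \<le> B \<and> validG IS gs' \<and> length gs' \<le> length gs + fIS IS a \<and>
              length gs < length gs' \<and> take (length gs) gs' = gs \<and> semT IS B a gs'))"
    proof -
      have P: "(validc ?isc (cg gs') \<and> clen (cg gs') \<le> clen (cg gs) + cnth ?FT (enc_form a) \<and>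
              clen (cg gs) < clen (cg gs') \<and> ctake (clen (cg gs)) (cg gs') = cg gs \<and> look T (enc_form a) (cg gs') \<noteq> 0) =
           (validG IS gs' \<and> length gs' \<le> length gs + fIS IS a \<and> length gs < length gs' \<and> take (length gs) gs' = gs \<and> semT IS B a gs')"
        if "cg gs' \<le> B" "gs \<noteq> []" for gs'
      proof (cases "length gs < length gs'")
        case True
        then show ?thesis using that L[OF wa lt that(1)] FT[OF lt] validc_correct[OF wf]
          by (simp add: ctake_cg)
      qed simp
      show ?thesis
      proof (cases "gs = []")
        case False
        then show ?thesis using P[OF _ False] by (simp only: ex_codes cg_0 simp_thms) blast
      qed simp
    qed
    then show ?thesis using DiaBbar by (simp add: bitc_def enc_form_pr del: enc_form.simps)
  next
    case (DiaN a)
    then have wa: "wf_form IS a" using wfp by auto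
    have lt: "enc_form a < enc_form \<phi>" using DiaN enc_form_sub by simp
    have "(cg gs \<noteq> 0 \<and> (\<exists>c'<Suc B. validc ?isc c' \<and> clen c' \<le> clen (cg gs) + cnth ?FT (enc_form a) \<and>
              tGc ?isc (clast (cg gs)) (cnth c' 0) \<and> look T (enc_form a) c' \<noteq> 0)) =
          (gs \<noteq> [] \<and> (\<exists>gs'. cg gs' \<le> B \<and> validG IS gs' \<and> length gs' \<le> length gs + fIS IS a \<and>
              tG IS (last gs) (hd gs') \<and> semT IS B a gs'))"
    proof -
      have P: "(validc ?isc (cg gs') \<and> clen (cg gs') \<le> clen (cg gs) + cnth ?FT (enc_form a) \<and>
              tGc ?isc (clast (cg gs)) (cnth (cg gs') 0) \<and> look T (enc_form a) (cg gs') \<noteq> 0) =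
           (validG IS gs' \<and> length gs' \<le> length gs + fIS IS a \<and> tG IS (last gs) (hd gs') \<and> semT IS B a gs')"
        if "cg gs' \<le> B" "gs \<noteq> []" for gs'
      proof (cases "validG IS gs'")
        case True
        then have "gs' \<noteq> []" by (simp add: validG_def)
        then show ?thesis using True that L[OF wa lt that(1)] FT[OF lt] validc_correct[OF wf]
          by (simp add: cnth_cg0 clast_cg tGc_correct[OF wf])
      qed (simp add: validc_correct[OF wf])
      show ?thesis
      proof (cases "gs = []")
        case False
        then show ?thesis using P[OF _ False] by (simp only: ex_codes cg_0 simp_thms) blast
      qed simp
    qed
    then show ?thesis using DiaN by (simp add: bitc_def enc_form_pr del: enc_form.simps)
  qed
  have "map (\<lambda>c. bitc T (enc_form \<phi>) c ?isc B ?FT) [0..<Suc B] =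
        map (\<lambda>c. if semT IS B \<phi> (dec c) then 1 else 0) [0..<Suc B]"
  proof (rule map_cong[OF refl])
    fix c assume "c \<in> set [0..<Suc B]"
    then have "cg (dec c) \<le> B" by auto
    from bit[OF this] show "bitc T (enc_form \<phi>) c ?isc B ?FT = (if semT IS B \<phi> (dec c) then 1 else 0)" by simp
  qed
  then show ?thesis by (simp only: Fsem_def hsem_def ctab_le pfst_pr psnd_pr decf_enc)
qed



lemma semtab_correct:
  assumes wf: "wf_isrl IS" and wfp: "wf_form IS \<phi>" and leX: "enc_form \<phi> \<le> X"
  shows "cnth (tab Fsem X (pr (enc_isrl IS) (pr B (fisT (enc_isrl IS) X)))) (enc_form \<phi>) = hsem IS B (enc_form \<phi>)"
proof -
  let ?G = "{enc_form \<psi> | \<psi>. wf_form IS \<psi>}"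
  have "cnth (tab Fsem X (pr (enc_isrl IS) (pr B (fisT (enc_isrl IS) X)))) z = hsem IS B z" if "z \<in> ?G" "z \<le> X" for z
  proof (rule tab_correct[OF _ that])
    fix z T assume z: "z \<in> ?G" "z \<le> X" and h: "\<And>z'. z' \<in> ?G \<Longrightarrow> z' < z \<Longrightarrow> cnth T z' = hsem IS B z'"
    then obtain \<psi> where e: "z = enc_form \<psi>" "wf_form IS \<psi>" by blast
    show "Fsem T z (pr (enc_isrl IS) (pr B (fisT (enc_isrl IS) X))) = hsem IS B z"
      unfolding e(1) using e z(2) h by (intro Fsem_correct[OF wf]) auto
  qed
  then show ?thesis using wfp leX by blast
qed

lemma need_bound:
  assumes t: "\<And>\<psi>. enc_form \<psi> \<le> X \<Longrightarrow> t (enc_form \<psi>) = fIS IS \<psi>"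
  shows "enc_form \<phi> \<le> X \<Longrightarrow> need IS \<phi> \<le> (\<Sum>y<enc_form \<phi>. t y)"
proof (induction \<phi>)
  have mono: "(\<Sum>y<m. t y) \<le> (\<Sum>y<n. t y)" if "m \<le> n" for m n
    using that by (intro sum_mono2) auto
  have step: "t (enc_form a) + (\<Sum>y<enc_form a. t y) \<le> (\<Sum>y<n. t y)" if "enc_form a < n" for a n
  proof -
    have "t (enc_form a) + (\<Sum>y<enc_form a. t y) = (\<Sum>y<Suc (enc_form a). t y)" by simp
    also have "\<dots> \<le> (\<Sum>y<n. t y)" using that by (intro mono) simp
    finally show ?thesis .
  qed
  {
    case (Neg a) then show ?case using enc_form_sub(1)[of a] mono[of "enc_form a" "enc_form (Neg a)"] by simp
  next
    case (And a b)
    then show ?case using enc_form_sub(2)[where a=a and b=b] enc_form_sub(3)[where a=a and b=b]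
        mono[of "enc_form a" "enc_form (And a b)"] mono[of "enc_form b" "enc_form (And a b)"]
      by (simp del: enc_form.simps)
  next
    case (K i a) then show ?case using enc_form_sub(4)[of a i] mono[of "enc_form a" "enc_form (K i a)"] by (simp del: enc_form.simps)
  next
    case (C G a) then show ?case using enc_form_sub(5)[of a G] mono[of "enc_form a" "enc_form (C G a)"] by (simp del: enc_form.simps)
  next
    case (DiaA a)
    then have "enc_form a \<le> X" using enc_form_sub(6)[of a] by simp
    then show ?case using DiaA step[of a "enc_form (DiaA a)"] enc_form_sub(6)[of a] t[of a] by (simp del: enc_form.simps)
  next
    case (DiaBbar a)
    then have "enc_form a \<le> X" using enc_form_sub(7)[of a] by simp
    then show ?case using DiaBbar step[of a "enc_form (DiaBbar a)"] enc_form_sub(7)[of a] t[of a] by (simp del: enc_form.simps)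
  next
    case (DiaN a)
    then have "enc_form a \<le> X" using enc_form_sub(8)[of a] by simp
    then show ?case using DiaN step[of a "enc_form (DiaN a)"] enc_form_sub(8)[of a] t[of a] by (simp del: enc_form.simps)
  }
qed auto

definition decide :: "nat \<Rightarrow> nat" where
  "decide x = cnth (cnth (tab Fsem (cnth x 1)
       (pr (cnth x 0) (pr (ctab (\<lambda>j. Gbc (cnth x 0))
             (clen (ctab (\<lambda>j. clast (cnth (cnth x 2) j)) (clen (cnth x 2))) + (\<Sum>y<cnth x 1. cnth (fisT (cnth x 0) (cnth x 1)) y)))
          (fisT (cnth x 0) (cnth x 1))))) (cnth x 1))
     (ctab (\<lambda>j. clast (cnth (cnth x 2) j)) (clen (cnth x 2)))"

lemma cp_decide: "cp decide"
  unfolding decide_def[abs_def] by (intro cp_tab[OF cp_Fsem] cpI4 cp_fisT)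



lemma enc_interval_le: "enc_interval I = le (map (\<lambda>s. le (map le s)) I)"
proof -
  have e: "enc_list f = (\<lambda>xs. le (map f xs))" for f :: "'a \<Rightarrow> nat" by (rule ext) (simp add: enc_list_def)
  show ?thesis by (simp only: enc_interval_def e)
qed

lemma enc_inst_simps:
  "cnth (enc_inst IS \<phi> I) 0 = enc_isrl IS" "cnth (enc_inst IS \<phi> I) 1 = enc_form \<phi>"
  "cnth (enc_inst IS \<phi> I) 2 = enc_interval I"
  by (simp_all add: enc_inst_def cnth_le del: list_encode.simps)

lemma c0_correct:
  assumes I: "isInterval IS I"
  shows "ctab (\<lambda>j. clast (cnth (enc_interval I) j)) (clen (enc_interval I)) = cg (gseq I)"
proof -
  have ne: "I ! j \<noteq> []" if "j < length I" for j
    using I that by (auto simp: isInterval_def isState_def)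
  have "map (\<lambda>j. clast (cnth (enc_interval I) j)) [0..<length I] = map le (map last I)"
    by (rule nth_equalityI) (auto simp: enc_interval_le ne last_map)
  then show ?thesis by (simp add: enc_interval_le cg_def gseq_def)
qed

lemma decide_correct:
  assumes wf: "wf_isrl IS" and wfp: "wf_form IS \<phi>" and I: "isInterval IS I"
  shows "decide (enc_inst IS \<phi> I) = (if satB IS I \<phi> then 1 else 0)"
proof -
  let ?isc = "enc_isrl IS"
  let ?FT = "fisT ?isc (enc_form \<phi>)"
  let ?Nb = "\<Sum>y<enc_form \<phi>. cnth ?FT y"
  let ?gs = "gseq I"
  let ?L = "length ?gs + ?Nb"
  let ?B = "ctab (\<lambda>j. Gbc ?isc) ?L"
  have need: "need IS \<phi> \<le> ?Nb"
    by (rule need_bound) (auto intro: fisT_correct[OF wf])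
  have B: "?B = le (replicate ?L (Gbc ?isc))" by (simp add: map_replicate_const)
  have bnd: "cg gs' \<le> ?B" if "validG IS gs'" "length gs' \<le> length ?gs + need IS \<phi>" for gs'
  proof -
    have "\<forall>y\<in>set (map le gs'). y \<le> Gbc ?isc"
      using that(1) valid_gstates[OF wf] gstates_bound[OF wf] by auto
    moreover have "length (map le gs') \<le> ?L" using that(2) need by simp
    ultimately show ?thesis unfolding B cg_def by (rule le_replicate_bound[rotated])
  qed
  have v: "validG IS ?gs" using I by (rule interval_validG)
  have c0B: "cg ?gs \<le> ?B" using bnd[OF v] by simp
  have "decide (enc_inst IS \<phi> I) = cnth (hsem IS ?B (enc_form \<phi>)) (cg ?gs)"
    unfolding decide_def enc_inst_simps c0_correct[OF I]
    using semtab_correct[OF wf wfp order_refl, of ?B] by (simp only: clen_cg)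
  also have "\<dots> = (if semT IS ?B \<phi> ?gs then 1 else 0)"
    using c0B by (simp add: hsem_def cnth_tab less_Suc_eq_le del: ctab_le)
  also have "semT IS ?B \<phi> ?gs = semG IS \<phi> ?gs"
    using v bnd by (intro semT_semG) auto
  also have "\<dots> = satB IS I \<phi>" using satB_semG[OF I] by simp
  finally show ?thesis .
qed

theorem mainTheorem6:
  shows "\<exists>f :: recf. \<forall>IS \<phi> I.
           wf_isrl IS \<and> wf_form IS \<phi> \<and> isInterval IS I \<longrightarrow>
           evals f [enc_inst IS \<phi> I] (if satB IS I \<phi> then 1 else 0)"
proof -
  obtain P where P: "\<And>x. peval P [x] = decide x" using cp_decide unfolding cp_def by blast
  have "evals (compile 1 P) [x] (decide x)" for x using comp_correct[of "[x]" 1 P] P by simp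
  then have "\<forall>IS \<phi> I. wf_isrl IS \<and> wf_form IS \<phi> \<and> isInterval IS I \<longrightarrow>
           evals (compile 1 P) [enc_inst IS \<phi> I] (if satB IS I \<phi> then 1 else 0)"
    using decide_correct by metis
  then show ?thesis by blast
qed


end
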